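(* Let $H=\sum_{s=1}^{n}h_sH_s$ with $h_s\ge 0$, $\Gamma=\sum_s h_s>0$, and each $H_s$ a Hermitian $d\times d$ matrix with operator norm $\|H_s\|\le 1$. Let $\mathcal{L}=\sum_s h_s\mathcal{L}_s$ with $\mathcal{L}_s(\rho)=-i[H_s,\rho]$, so that $\Lambda(t)=\exp(t\mathcal{L})$ is the unitary channel $\rho\mapsto e^{-iHt}\rho e^{iHt}$. Let $t\ge 0$ and let $r$ be a positive integer with $r\Gamma$ a positive integer. Then $$\|\Lambda(t)-\mathcal{E}(t/r)^{r\Gamma}\|_\diamond\le \frac{4t^2\Gamma}{r},$$ and hence for any $\epsilon>0$, choosing $r\ge\left\lceil \frac{4t^{2}\Gamma}{\epsilon}\right\rceil$ (with $r\Gamma$ an integer) guarantees $\|\Lambda(t)-\mathcal{E}(t/r)^{r\Gamma}\|_\diamond\le\epsilon$.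
   Context: Work on $d\times d$ complex matrices. A superoperator is a linear map on $d\times d$ matrices; its diamond norm is $\|\Phi\|_\diamond=\sup\{\|(\Phi\otimes\mathrm{id}_d)(X)\|_1:\|X\|_1\le 1\}$, where $\|\cdot\|_1$ is the trace norm. With $p_s=h_s/\Gamma$, the qDRIFT channel is $\mathcal{E}(\tau)=\sum_{s=1}^{n}p_s\exp(\tau\mathcal{L}_s)$, i.e. $\mathcal{E}(\tau)(\rho)=\sum_s p_s e^{-iH_s\tau}\rho e^{iH_s\tau}$, for $\tau\ge0$. Powers of superoperators denote repeated composition. *)

theory Defs
  imports "HOL-Analysis.Analysis"
begin

text \<open>Complex d x d matrices are modelled as complex^'n^'n with d = CARD('n).
  Matrix product is ** (the product * on this type is entrywise, hence not used).\<close>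

type_synonym 'n cmat = "complex^'n^'n"

definition cadj :: "complex^'n^'n \<Rightarrow> complex^'n^'n" where
  "cadj A = (\<chi> i j. cnj (A $ j $ i))"

definition cscale :: "complex \<Rightarrow> complex^'n^'m \<Rightarrow> complex^'n^'m" where
  "cscale c A = (\<chi> i j. c * A $ i $ j)"

primrec mpow :: "complex^'n^'n \<Rightarrow> nat \<Rightarrow> complex^'n^'n" where
  "mpow A 0 = mat 1"
| "mpow A (Suc k) = A ** mpow A k"

definition mexp :: "complex^'n^'n \<Rightarrow> complex^'n^'n" where
  "mexp A = (\<Sum>k. (1 / fact k) *\<^sub>R mpow A k)"

definition hermitian :: "complex^'n^'n \<Rightarrow> bool" where
  "hermitian A \<longleftrightarrow> cadj A = A"

definition psd :: "complex^'n^'n \<Rightarrow> bool" where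
  "psd P \<longleftrightarrow> hermitian P \<and> (\<forall>x::complex^'n. 0 \<le> Re (\<Sum>i\<in>UNIV. cnj (x $ i) * (P *v x) $ i))"

definition trace_norm :: "complex^'n^'n \<Rightarrow> real" where
  "trace_norm X = Re (trace (THE P. psd P \<and> P ** P = cadj X ** X))"

definition op_norm :: "complex^'n^'n \<Rightarrow> real" where
  "op_norm A = onorm (\<lambda>x. A *v x)"

text \<open>Superoperators: maps on d x d matrices. Phi tensor id_d acts on (d*d) x (d*d) matrices,
  indexed by pairs (system index, ancilla index).\<close>
definition tensor_id ::
  "(complex^'n^'n \<Rightarrow> complex^'n^'n) \<Rightarrow> complex^('n\<times>'n)^('n\<times>'n) \<Rightarrow> complex^('n\<times>'n)^('n\<times>'n)" where
  "tensor_id \<Phi> X = (\<chi> p q. \<Phi> (\<chi> i j. X $ (i, snd p) $ (j, snd q)) $ fst p $ fst q)"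

definition diamond_norm :: "(complex^'n^'n \<Rightarrow> complex^'n^'n) \<Rightarrow> real" where
  "diamond_norm \<Phi> = Sup {trace_norm (tensor_id \<Phi> X) | X :: complex^('n\<times>'n)^('n\<times>'n). trace_norm X \<le> 1}"

definition unitary_evol :: "complex^'n^'n \<Rightarrow> real \<Rightarrow> complex^'n^'n \<Rightarrow> complex^'n^'n" where
  "unitary_evol H \<tau> \<rho> = mexp (cscale (- \<i> * of_real \<tau>) H) ** \<rho> ** mexp (cscale (\<i> * of_real \<tau>) H)"

definition qdrift :: "nat \<Rightarrow> (nat \<Rightarrow> real) \<Rightarrow> (nat \<Rightarrow> complex^'n^'n) \<Rightarrow> real
    \<Rightarrow> complex^'n^'n \<Rightarrow> complex^'n^'n" where
  "qdrift n h Hs \<tau> \<rho> = (\<Sum>s=1..n. (h s / (\<Sum>s'=1..n. h s')) *\<^sub>R unitary_evol (Hs s) \<tau> \<rho>)"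

end

theory Submission
  imports Defs "HOL-Probability.Characteristic_Functions"
begin

definition vinner :: "complex^'n \<Rightarrow> complex^'n \<Rightarrow> complex" where
  "vinner x y = (\<Sum>i\<in>UNIV. cnj (x $ i) * y $ i)"

definition diagm :: "complex^'n \<Rightarrow> complex^'n^'n" where
  "diagm z = (\<chi> i j. if i = j then z $ i else 0)"

definition unitary :: "complex^'n^'n \<Rightarrow> bool" where
  "unitary Q \<longleftrightarrow> cadj Q ** Q = mat 1 \<and> Q ** cadj Q = mat 1"

lemma cadj_nth[simp]: "cadj A $ i $ j = cnj (A $ j $ i)"
  by (simp add: cadj_def)

lemma cadj_cadj[simp]: "cadj (cadj A) = A"
  by (simp add: vec_eq_iff)

lemma cadj_mult: "cadj (A ** B) = cadj B ** cadj A"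
  by (simp add: vec_eq_iff matrix_matrix_mult_def mult.commute)

lemma cadj_add: "cadj (A + B) = cadj A + cadj B"
  by (simp add: vec_eq_iff)

lemma cadj_diff: "cadj (A - B) = cadj A - cadj B"
  by (simp add: vec_eq_iff)

lemma cadj_mat1[simp]: "cadj (mat 1) = mat 1"
  by (simp add: vec_eq_iff mat_def)

lemma cadj_scaleR: "cadj (c *\<^sub>R A) = c *\<^sub>R cadj A"
  by (simp add: vec_eq_iff)

lemma cscale_nth[simp]: "cscale c A $ i $ j = c * A $ i $ j"
  by (simp add: cscale_def)

lemma cadj_cscale: "cadj (cscale c A) = cscale (cnj c) (cadj A)"
  by (simp add: vec_eq_iff)

lemma diagm_nth[simp]: "diagm z $ i $ j = (if i = j then z $ i else 0)"
  by (simp add: diagm_def)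

lemma cadj_diagm: "cadj (diagm z) = diagm (\<chi> i. cnj (z $ i))"
  by (simp add: vec_eq_iff)

lemma if0_mult: "(if P then a else 0) * (b::complex) = (if P then a * b else 0)"
  by simp

lemma mult_if0: "(b::complex) * (if P then a else 0) = (if P then b * a else 0)"
  by simp

lemma diagm_mult: "diagm a ** diagm b = diagm (\<chi> i. a $ i * b $ i)"
  by (simp add: vec_eq_iff matrix_matrix_mult_def if0_mult mult_if0)

lemma diagm_one: "diagm (\<chi> i. 1) = mat 1"
  by (simp add: vec_eq_iff mat_def)

lemma mat_mult_diagm_nth: "(A ** diagm z) $ i $ j = A $ i $ j * z $ j"
  by (simp add: matrix_matrix_mult_def mult_if0 if0_mult)

lemma diagm_mult_mat_nth: "(diagm z ** A) $ i $ j = z $ i * A $ i $ j"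
  by (simp add: matrix_matrix_mult_def mult_if0 if0_mult)

lemma vinner_adj: "vinner x (A *v y) = vinner (cadj A *v x) y"
proof -
  have "vinner x (A *v y) = (\<Sum>i\<in>UNIV. \<Sum>j\<in>UNIV. cnj (x $ i) * A $ i $ j * y $ j)"
    by (simp add: vinner_def matrix_vector_mult_def sum_distrib_left mult.assoc)
  also have "\<dots> = (\<Sum>j\<in>UNIV. \<Sum>i\<in>UNIV. cnj (x $ i) * A $ i $ j * y $ j)"
    by (rule sum.swap)
  also have "\<dots> = (\<Sum>j\<in>UNIV. (\<Sum>i\<in>UNIV. cnj (x $ i) * A $ i $ j) * y $ j)"
    by (simp add: sum_distrib_right)
  also have "\<dots> = vinner (cadj A *v x) y"
    by (simp add: vinner_def matrix_vector_mult_def mult.commute)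
  finally show ?thesis .
qed

lemma vinner_self: "vinner x x = of_real ((norm x)\<^sup>2)"
proof -
  have "(norm x)\<^sup>2 = (\<Sum>i\<in>UNIV. (cmod (x $ i))\<^sup>2)"
    by (simp add: norm_vec_def L2_set_def sum_nonneg)
  then have "of_real ((norm x)\<^sup>2) = (\<Sum>i\<in>UNIV. complex_of_real ((cmod (x $ i))\<^sup>2))"
    by simp
  also have "\<dots> = vinner x x"
    unfolding vinner_def by (rule sum.cong) (simp_all add: complex_norm_square mult.commute del: of_real_power)
  finally show ?thesis by simp
qed

lemma Re_vinner: "Re (vinner x y) = inner x y"
  by (simp add: vinner_def inner_vec_def Re_sum inner_complex_def)

lemma vinner_scale_right: "vinner x (c *s y) = c * vinner x y"
  by (simp add: vinner_def sum_distrib_left algebra_simps)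

lemma vinner_scale_left: "vinner (c *s x) y = cnj c * vinner x y"
  by (simp add: vinner_def sum_distrib_left algebra_simps)

lemma vinner_add_right: "vinner x (y + z) = vinner x y + vinner x z"
  by (simp add: vinner_def sum.distrib algebra_simps)

lemma vinner_add_left: "vinner (x + y) z = vinner x z + vinner y z"
  by (simp add: vinner_def sum.distrib algebra_simps)

lemma vinner_diff_right: "vinner x (y - z) = vinner x y - vinner x z"
  by (simp add: vinner_def sum_subtractf algebra_simps)

lemma vinner_diff_left: "vinner (x - y) z = vinner x z - vinner y z"
  by (simp add: vinner_def sum_subtractf algebra_simps)

lemma vinner_cnj: "cnj (vinner x y) = vinner y x"
  by (simp add: vinner_def mult.commute)

lemma vinner_zero_left[simp]: "vinner 0 y = 0" and vinner_zero_right[simp]: "vinner x 0 = 0"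
  by (simp_all add: vinner_def)

lemma vinner_cauchy: "cmod (vinner x y) \<le> norm x * norm y"
proof (cases "vinner x y = 0")
  case True then show ?thesis by simp
next
  case False
  define c where "c = cnj (vinner x y) / cmod (vinner x y)"
  have cm: "cmod c = 1" using False by (simp add: c_def norm_divide)
  have "cnj (vinner x y) * vinner x y = of_real ((cmod (vinner x y))\<^sup>2)"
    by (simp add: complex_norm_square[symmetric] mult.commute del: of_real_power)
  then have "vinner x (c *s y) = of_real (cmod (vinner x y))"
    using False by (simp add: vinner_scale_right c_def power2_eq_square)
  then have "cmod (vinner x y) = inner x (c *s y)"
    by (metis Re_complex_of_real Re_vinner)
  also have "\<dots> \<le> norm x * norm (c *s y)"
    by (rule Cauchy_Schwarz_ineq2[THEN abs_le_D1])
  also have "norm (c *s y) = norm y"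
  proof -
    have "(norm (c *s y))\<^sup>2 = (norm y)\<^sup>2"
      using cm by (simp add: norm_vec_def L2_set_def norm_mult power_mult_distrib)
    then show ?thesis by (simp add: power2_eq_iff_nonneg)
  qed
  finally show ?thesis .
qed

lemma norm_sq_vinner: "(norm x)\<^sup>2 = Re (vinner x x)"
  by (simp add: vinner_self)

lemma mv_scaleR: "A *v (c *\<^sub>R x) = c *\<^sub>R (A *v (x :: complex^'n))"
  by (simp add: vec_eq_iff matrix_vector_mult_def scaleR_sum_right)

lemma linear_mv: "linear (\<lambda>x::complex^'n. A *v x)"
  by (rule linearI) (simp_all add: matrix_vector_right_distrib mv_scaleR)

lemma bounded_linear_mv: "bounded_linear (\<lambda>x::complex^'n. A *v x)"
  using linear_mv linear_conv_bounded_linear by blast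

lemma op_norm_bound: "norm (A *v x) \<le> op_norm A * norm x"
  unfolding op_norm_def by (rule onorm[OF bounded_linear_mv])

lemma op_norm_le: "(\<And>x. norm (A *v x) \<le> b * norm x) \<Longrightarrow> op_norm A \<le> b"
  unfolding op_norm_def by (rule onorm_le)

lemma op_norm_nonneg: "0 \<le> op_norm A"
  unfolding op_norm_def by (rule onorm_pos_le[OF bounded_linear_mv])

lemma op_norm_mult: "op_norm (A ** B) \<le> op_norm A * op_norm B"
proof (rule op_norm_le)
  fix x
  have "norm ((A ** B) *v x) = norm (A *v (B *v x))" by (simp add: matrix_vector_mul_assoc)
  also have "\<dots> \<le> op_norm A * norm (B *v x)" by (rule op_norm_bound)
  also have "\<dots> \<le> op_norm A * (op_norm B * norm x)"
    by (rule mult_left_mono[OF op_norm_bound op_norm_nonneg])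
  finally show "norm ((A ** B) *v x) \<le> op_norm A * op_norm B * norm x" by simp
qed

lemma op_norm_add: "op_norm (A + B) \<le> op_norm A + op_norm B"
proof (rule op_norm_le)
  fix x
  have "norm ((A + B) *v x) \<le> norm (A *v x) + norm (B *v x)"
    by (simp add: matrix_vector_mult_add_rdistrib norm_triangle_ineq)
  also have "\<dots> \<le> op_norm A * norm x + op_norm B * norm x"
    by (intro add_mono op_norm_bound)
  finally show "norm ((A + B) *v x) \<le> (op_norm A + op_norm B) * norm x" by (simp add: algebra_simps)
qed

lemma op_norm_scaleR: "op_norm (c *\<^sub>R A) \<le> \<bar>c\<bar> * op_norm A"
proof (rule op_norm_le)
  fix x
  have "(c *\<^sub>R A) *v x = c *\<^sub>R (A *v x)"
    by (simp add: vec_eq_iff matrix_vector_mult_def scaleR_sum_right)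
  then show "norm ((c *\<^sub>R A) *v x) \<le> \<bar>c\<bar> * op_norm A * norm x"
    by (simp add: mult.assoc mult_left_mono op_norm_bound)
qed

definition orthonormal :: "(complex^'n) set \<Rightarrow> bool" where
  "orthonormal S \<longleftrightarrow> (\<forall>v\<in>S. vinner v v = 1) \<and> (\<forall>v\<in>S. \<forall>w\<in>S. v \<noteq> w \<longrightarrow> vinner v w = 0)"

definition perp :: "(complex^'n) set \<Rightarrow> (complex^'n) set" where
  "perp S = {x. \<forall>v\<in>S. vinner v x = 0}"

lemma scaleR_nth_c: "(c *\<^sub>R (y::complex^'n)) $ i = of_real c * y $ i"
  unfolding vector_scaleR_component by (rule scaleR_conv_of_real)

lemma vinner_scaleR_right: "vinner x (c *\<^sub>R y) = of_real c * vinner x y"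
  unfolding vinner_def scaleR_nth_c by (simp add: sum_distrib_left algebra_simps)

lemma vinner_scaleR_left: "vinner (c *\<^sub>R x) y = of_real c * vinner x y"
  unfolding vinner_def scaleR_nth_c by (simp add: sum_distrib_left algebra_simps)

lemma aux_frac: "(B::real) > 0 \<Longrightarrow> a\<^sup>2 / B - (B - 1) * a\<^sup>2 / B\<^sup>2 = a\<^sup>2 / B\<^sup>2"
  by (simp add: field_simps power2_eq_square)

lemma vinner_sum_right: "vinner x (\<Sum>v\<in>S. f v) = (\<Sum>v\<in>S. vinner x (f v))"
  by (induction S rule: infinite_finite_induct) (simp_all add: vinner_add_right)

lemma cscale_split: "c *s v = Re c *\<^sub>R v + Im c *\<^sub>R (\<i> *s (v::complex^'n))"
  by (simp add: vec_eq_iff complex_eq_iff)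

lemma continuous_vinner_right: "continuous_on UNIV (\<lambda>x. vinner v x)"
  unfolding vinner_def by (intro continuous_intros)

lemma continuous_quad: "continuous_on UNIV (\<lambda>x. Re (vinner x (A *v x)))"
  unfolding vinner_def matrix_vector_mult_def by (intro continuous_intros)

lemma exists_perp:
  fixes S :: "(complex^'n) set"
  assumes fin: "finite S" and on: "orthonormal S" and card: "card S < CARD('n)"
  shows "\<exists>y. y \<noteq> 0 \<and> y \<in> perp S"
proof -
  define T where "T = S \<union> (\<lambda>v. \<i> *s v) ` S"
  have finT: "finite T" using fin by (simp add: T_def)
  have "card T \<le> card S + card ((\<lambda>v. \<i> *s v) ` S)"
    unfolding T_def by (rule card_Un_le)
  also have "\<dots> \<le> card S + card S" using card_image_le[OF fin] by simp
  also have "\<dots> < DIM(complex^'n)" using card by simp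
  finally have cT: "card T < dim (UNIV :: (complex^'n) set)" by simp
  have "\<not> (UNIV \<subseteq> span T)"
  proof
    assume "UNIV \<subseteq> span T"
    from dim_le_card[OF this finT] cT show False by simp
  qed
  then obtain x where x: "x \<notin> span T" by blast
  define s where "s = (\<Sum>v\<in>S. vinner v x *s v)"
  have "s \<in> span T"
    unfolding s_def
  proof (rule span_sum)
    fix v assume v: "v \<in> S"
    have "v \<in> span T" "\<i> *s v \<in> span T" using v by (auto simp: T_def intro: span_base)
    then show "vinner v x *s v \<in> span T"
      by (subst cscale_split) (intro span_add span_scale)
  qed
  then have y0: "x - s \<noteq> 0" using x by auto
  have "x - s \<in> perp S"
    unfolding perp_def
  proof (clarify)
    fix w assume w: "w \<in> S"
    have "vinner w s = (\<Sum>v\<in>S. vinner v x * vinner w v)"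
      by (simp add: s_def vinner_sum_right vinner_scale_right)
    also have "\<dots> = (\<Sum>v\<in>S. if v = w then vinner w x else 0)"
      using on w by (intro sum.cong) (auto simp: orthonormal_def)
    also have "\<dots> = vinner w x" using w fin by simp
    finally show "vinner w (x - s) = 0" by (simp add: vinner_diff_right)
  qed
  with y0 show ?thesis by blast
qed

lemma quad_zero:
  fixes a b :: real
  assumes "\<And>e. a * e + b * e\<^sup>2 \<le> 0"
  shows "a = 0"
proof (rule ccontr)
  assume a: "a \<noteq> 0"
  define e where "e = a / (\<bar>b\<bar> + 1)"
  have pos: "\<bar>b\<bar> + 1 > 0" by simp
  have "a * e = a\<^sup>2 / (\<bar>b\<bar> + 1)" by (simp add: e_def power2_eq_square)
  moreover have "b * e\<^sup>2 \<ge> - (\<bar>b\<bar> * e\<^sup>2)"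
  proof -
    have "- \<bar>b\<bar> \<le> b" by simp
    then have "(- \<bar>b\<bar>) * e\<^sup>2 \<le> b * e\<^sup>2" by (rule mult_right_mono) simp
    then show ?thesis by simp
  qed
  moreover have "\<bar>b\<bar> * e\<^sup>2 = \<bar>b\<bar> * a\<^sup>2 / (\<bar>b\<bar> + 1)\<^sup>2"
    by (simp add: e_def power_divide)
  moreover have "a\<^sup>2 / (\<bar>b\<bar> + 1) - \<bar>b\<bar> * a\<^sup>2 / (\<bar>b\<bar> + 1)\<^sup>2 = a\<^sup>2 / (\<bar>b\<bar> + 1)\<^sup>2"
    using aux_frac[OF pos, of a] by simp
  moreover have "a\<^sup>2 / (\<bar>b\<bar> + 1)\<^sup>2 > 0" using a by simp
  ultimately have "a * e + b * e\<^sup>2 > 0" by linarith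
  with assms[of e] show False by simp
qed

lemma herm_vinner: "hermitian A \<Longrightarrow> vinner x (A *v y) = vinner (A *v x) y"
  by (simp add: vinner_adj hermitian_def)

lemma expand_quad:
  assumes "hermitian A"
  shows "Re (vinner (x + c *\<^sub>R y) (A *v (x + c *\<^sub>R y))) =
    Re (vinner x (A *v x)) + 2 * c * Re (vinner y (A *v x)) + c\<^sup>2 * Re (vinner y (A *v y))"
proof -
  have h: "vinner x (A *v y) = cnj (vinner y (A *v x))"
    using herm_vinner[OF assms] by (simp add: vinner_cnj)
  show ?thesis
    by (simp add: matrix_vector_right_distrib mv_scaleR vinner_add_left vinner_add_right
        vinner_scaleR_left vinner_scaleR_right h power2_eq_square algebra_simps)
qed

lemma expand_norm:
  "(norm (x + c *\<^sub>R y))\<^sup>2 = (norm x)\<^sup>2 + 2 * c * Re (vinner x y) + c\<^sup>2 * (norm y)\<^sup>2"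
  unfolding power2_norm_eq_inner Re_vinner
  by (simp add: inner_add_left inner_add_right power2_eq_square algebra_simps inner_commute)

lemma perp_add: "x \<in> perp S \<Longrightarrow> y \<in> perp S \<Longrightarrow> x + y \<in> perp S"
  by (simp add: perp_def vinner_add_right)

lemma perp_scaleR: "x \<in> perp S \<Longrightarrow> c *\<^sub>R x \<in> perp S"
  by (simp add: perp_def vinner_scaleR_right)

lemma perp_cscale: "x \<in> perp S \<Longrightarrow> c *s x \<in> perp S"
  by (simp add: perp_def vinner_scale_right)

lemma perp_diff: "x \<in> perp S \<Longrightarrow> y \<in> perp S \<Longrightarrow> x - y \<in> perp S"
  by (simp add: perp_def vinner_diff_right)

lemma perp_invariant:
  assumes "hermitian A" and eig: "\<forall>v\<in>S. \<exists>\<mu>::real. A *v v = of_real \<mu> *s v"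
    and x: "x \<in> perp S"
  shows "A *v x \<in> perp S"
  unfolding perp_def
proof clarify
  fix v assume v: "v \<in> S"
  then obtain \<mu> where mu: "A *v v = of_real \<mu> *s v" using eig by blast
  have "vinner v (A *v x) = vinner (A *v v) x" by (rule herm_vinner[OF assms(1)])
  also have "\<dots> = 0" using x v by (simp add: mu vinner_scale_left perp_def)
  finally show "vinner v (A *v x) = 0" .
qed

lemma closed_perp: "closed (perp S)"
proof -
  have "perp S = (\<Inter>v\<in>S. {x. vinner v x = 0})" by (auto simp: perp_def)
  moreover have "closed {x. vinner v x = 0}" for v
    by (rule closed_Collect_eq) (simp_all add: continuous_vinner_right)
  ultimately show ?thesis by auto
qed

lemma quad_scale: "Re (vinner (c *\<^sub>R z) (A *v (c *\<^sub>R z))) = c\<^sup>2 * Re (vinner z (A *v z))"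
  by (simp add: mv_scaleR vinner_scaleR_left vinner_scaleR_right power2_eq_square)

lemma eigen_in_perp:
  fixes A :: "complex^'n^'n"
  assumes herm: "hermitian A" and fin: "finite S" and on: "orthonormal S"
    and eig: "\<forall>v\<in>S. \<exists>\<mu>::real. A *v v = of_real \<mu> *s v" and card: "card S < CARD('n)"
  shows "\<exists>x0\<in>perp S. norm x0 = 1 \<and> (\<exists>\<mu>::real. A *v x0 = of_real \<mu> *s x0)"
proof -
  define W where "W = perp S"
  define K where "K = W \<inter> sphere 0 1"
  define f where "f x = Re (vinner x (A *v x))" for x
  obtain y where y: "y \<noteq> 0" "y \<in> W" using exists_perp[OF fin on card] W_def by blast
  have "(1 / norm y) *\<^sub>R y \<in> K" using y by (simp add: K_def W_def perp_scaleR)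
  then have Kne: "K \<noteq> {}" by blast
  have "compact (sphere (0::complex^'n) 1 \<inter> perp S)"
    by (rule compact_Int_closed[OF compact_sphere closed_perp])
  then have "compact K" unfolding K_def W_def by (simp add: Int_commute)
  moreover have "continuous_on K f"
    unfolding f_def by (rule continuous_on_subset[OF continuous_quad]) simp
  ultimately obtain x0 where x0K: "x0 \<in> K" and mx: "\<forall>y\<in>K. f y \<le> f x0"
    using continuous_attains_sup[OF _ Kne] by blast
  have x0W: "x0 \<in> W" and nx0: "norm x0 = 1" using x0K by (auto simp: K_def)
  have bound: "f z \<le> f x0 * (norm z)\<^sup>2" if z: "z \<in> W" for z
  proof (cases "z = 0")
    case True then show ?thesis by (simp add: f_def)
  next
    case False
    define z' where "z' = (1 / norm z) *\<^sub>R z"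
    have "z' \<in> K" using z False by (simp add: K_def W_def z'_def perp_scaleR)
    then have "f z' \<le> f x0" using mx by blast
    moreover have "f z' = f z / (norm z)\<^sup>2"
      unfolding z'_def f_def quad_scale by (simp add: power_divide)
    ultimately show ?thesis using False by (simp add: divide_le_eq)
  qed
  have orth: "vinner y (A *v x0) = 0" if yW: "y \<in> W" and yo: "vinner x0 y = 0" for y
  proof -
    have re0: "2 * Re (vinner y (A *v x0)) = 0" if yW: "y \<in> W" and yo: "vinner x0 y = 0" for y
    proof (rule quad_zero)
      fix e :: real
      have "x0 + e *\<^sub>R y \<in> W" using x0W yW by (simp add: W_def perp_add perp_scaleR)
      from bound[OF this] have "f (x0 + e *\<^sub>R y) \<le> f x0 * (norm (x0 + e *\<^sub>R y))\<^sup>2" .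
      then have "f x0 + 2 * e * Re (vinner y (A *v x0)) + e\<^sup>2 * f y
          \<le> f x0 * (1 + e\<^sup>2 * (norm y)\<^sup>2)"
        unfolding f_def expand_quad[OF herm] expand_norm using nx0 yo by simp
      then show "(2 * Re (vinner y (A *v x0))) * e + (f y - f x0 * (norm y)\<^sup>2) * e\<^sup>2 \<le> 0"
        by (simp add: algebra_simps)
    qed
    have a: "Re (vinner y (A *v x0)) = 0" using re0[OF yW yo] by simp
    have "\<i> *s y \<in> W" using yW by (simp add: W_def perp_cscale)
    moreover have "vinner x0 (\<i> *s y) = 0" using yo by (simp add: vinner_scale_right)
    ultimately have "2 * Re (vinner (\<i> *s y) (A *v x0)) = 0" by (rule re0)
    then have b: "Im (vinner y (A *v x0)) = 0" by (simp add: vinner_scale_left)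
    from a b show ?thesis by (simp add: complex_eq_iff)
  qed
  define c where "c = vinner x0 (A *v x0)"
  define z where "z = A *v x0 - c *s x0"
  have x0x0: "vinner x0 x0 = 1" using nx0 by (simp add: vinner_self)
  have zW: "z \<in> W"
    unfolding z_def W_def
    using x0W W_def by (intro perp_diff perp_cscale perp_invariant[OF herm eig]) auto
  have zo: "vinner x0 z = 0"
    by (simp add: z_def vinner_diff_right vinner_scale_right c_def x0x0)
  have "vinner z z = vinner z (A *v x0) - c * vinner z x0"
    by (simp add: z_def vinner_diff_right vinner_scale_right)
  also have "vinner z x0 = 0" using zo vinner_cnj[of x0 z] by simp
  also have "vinner z (A *v x0) = 0" by (rule orth[OF zW zo])
  finally have "vinner z z = 0" by simp
  then have "z = 0" by (simp add: vinner_self)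
  then have Ax0: "A *v x0 = c *s x0" by (simp add: z_def)
  have "cnj c = c"
    unfolding c_def vinner_cnj by (rule herm_vinner[OF herm, symmetric])
  then have "Im (cnj c) = Im c" by simp
  then have "Im c = 0" by simp
  then have "c = of_real (Re c)" by (simp add: complex_eq_iff)
  with Ax0 have "A *v x0 = of_real (Re c) *s x0" by simp
  with x0W nx0 show ?thesis unfolding W_def by blast
qed

lemma spectral_sets:
  fixes A :: "complex^'n^'n"
  assumes herm: "hermitian A"
  shows "k \<le> CARD('n) \<Longrightarrow> \<exists>S. finite S \<and> card S = k \<and> orthonormal S \<and>
           (\<forall>v\<in>S. \<exists>\<mu>::real. A *v v = of_real \<mu> *s v)"
proof (induction k)
  case 0
  show ?case by (rule exI[of _ "{}"]) (simp add: orthonormal_def)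
next
  case (Suc k)
  then obtain S where S: "finite S" "card S = k" "orthonormal S"
    "\<forall>v\<in>S. \<exists>\<mu>::real. A *v v = of_real \<mu> *s v" by auto
  have "card S < CARD('n)" using Suc.prems S(2) by simp
  from eigen_in_perp[OF herm S(1,3,4) this] obtain x0 \<mu> where
    x0: "x0 \<in> perp S" "norm x0 = 1" "A *v x0 = of_real \<mu> *s x0" by blast
  have x0x0: "vinner x0 x0 = 1" using x0(2) by (simp add: vinner_self)
  have nin: "x0 \<notin> S"
  proof
    assume "x0 \<in> S"
    then have "vinner x0 x0 = 0" using x0(1) by (simp add: perp_def)
    with x0x0 show False by simp
  qed
  have vo: "vinner x0 v = 0" if "v \<in> S" for v
  proof -
    have "vinner v x0 = 0" using x0(1) that by (simp add: perp_def)
    then show ?thesis using vinner_cnj[of v x0] by simp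
  qed
  have "orthonormal (insert x0 S)"
    using S(3) x0(1) x0x0 vo unfolding orthonormal_def perp_def by auto
  then show ?case using S nin x0(3)
    by (intro exI[of _ "insert x0 S"]) auto
qed

definition col :: "complex^'n^'n \<Rightarrow> 'n \<Rightarrow> complex^'n" where
  "col Q j = (\<chi> i. Q $ i $ j)"

theorem spectral:
  fixes A :: "complex^'n^'n"
  assumes herm: "hermitian A"
  shows "\<exists>Q \<mu>. unitary Q \<and> A = Q ** diagm (\<chi> j. of_real (\<mu> j)) ** cadj Q \<and>
     (\<forall>j. A *v col Q j = of_real (\<mu> j) *s col Q j)"
proof -
  obtain S where S: "finite S" "card S = CARD('n)" "orthonormal S"
    "\<forall>v\<in>S. \<exists>\<mu>::real. A *v v = of_real \<mu> *s v"
    using spectral_sets[OF herm, of "CARD('n)"] by auto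
  obtain \<phi> where phi: "bij_betw \<phi> (UNIV :: 'n set) S"
    using finite_same_card_bij[of "UNIV::'n set" S] S(1,2) by auto
  have phiS: "\<phi> j \<in> S" for j using phi by (auto simp: bij_betw_def)
  have phiinj: "\<phi> j = \<phi> k \<Longrightarrow> j = k" for j k using phi by (auto simp: bij_betw_def inj_on_def)
  define \<mu> where "\<mu> j = (SOME m::real. A *v \<phi> j = of_real m *s \<phi> j)" for j
  have mu: "A *v \<phi> j = of_real (\<mu> j) *s \<phi> j" for j
    unfolding \<mu>_def by (rule someI_ex) (use S(4) phiS in blast)
  define Q where "Q = (\<chi> i j. \<phi> j $ i)"
  have colQ: "col Q j = \<phi> j" for j by (simp add: col_def Q_def vec_eq_iff)
  have QQ: "cadj Q ** Q = mat 1"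
  proof -
    have "(cadj Q ** Q) $ j $ k = vinner (\<phi> j) (\<phi> k)" for j k
      by (simp add: matrix_matrix_mult_def Q_def vinner_def)
    moreover have "vinner (\<phi> j) (\<phi> k) = (if j = k then 1 else 0)" for j k
    proof (cases "j = k")
      case True then show ?thesis using S(3) phiS by (simp add: orthonormal_def)
    next
      case False
      then have "\<phi> j \<noteq> \<phi> k" using phiinj by blast
      then show ?thesis using S(3) phiS False by (simp add: orthonormal_def)
    qed
    ultimately show ?thesis by (simp add: vec_eq_iff mat_def)
  qed
  then have QQ2: "Q ** cadj Q = mat 1" using matrix_left_right_inverse by blast
  have AQ: "A ** Q = Q ** diagm (\<chi> j. of_real (\<mu> j))"
  proof -
    have "(A ** Q) $ i $ j = (A *v \<phi> j) $ i" for i j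
      by (simp add: matrix_matrix_mult_def matrix_vector_mult_def Q_def)
    then show ?thesis
      by (simp add: vec_eq_iff mat_mult_diagm_nth mu Q_def mult.commute)
  qed
  have "A = A ** (Q ** cadj Q)" using QQ2 by simp
  also have "\<dots> = Q ** diagm (\<chi> j. of_real (\<mu> j)) ** cadj Q"
    by (simp add: matrix_mul_assoc AQ)
  finally show ?thesis using QQ QQ2 mu colQ unfolding unitary_def by metis
qed

lemma mv_cscale: "A *v (c *s x) = c *s (A *v (x::complex^'n))"
  by (simp add: vec_eq_iff matrix_vector_mult_def sum_distrib_left algebra_simps)

lemma mat_col: "(A ** Q) $ i $ j = (A *v col Q j) $ i"
  by (simp add: matrix_matrix_mult_def matrix_vector_mult_def col_def)

lemma adj_mid: "(cadj Q ** B ** Q) $ j $ k = vinner (col Q j) (B *v col Q k)"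
proof -
  have "(cadj Q ** B ** Q) $ j $ k = (cadj Q ** (B ** Q)) $ j $ k" by (simp add: matrix_mul_assoc)
  also have "\<dots> = vinner (col Q j) (B *v col Q k)"
    by (simp add: matrix_matrix_mult_def vinner_def col_def matrix_vector_mult_def)
  finally show ?thesis .
qed

lemma unitary_col: "unitary Q \<Longrightarrow> vinner (col Q j) (col Q j) = 1"
proof -
  assume "unitary Q"
  then have "cadj Q ** mat 1 ** Q = mat 1" by (simp add: unitary_def)
  then have "(cadj Q ** mat 1 ** Q) $ j $ j = 1" by (simp add: mat_def)
  moreover have "vinner (col Q j) (col Q j) = (cadj Q ** mat 1 ** Q) $ j $ j"
    using adj_mid[of Q "mat 1" j j] by (simp only: matrix_vector_mul_lid)
  ultimately show ?thesis by simp
qed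

lemma unitary_col_norm: "unitary Q \<Longrightarrow> norm (col Q j) = 1"
proof -
  assume "unitary Q"
  then have "complex_of_real ((norm (col Q j))\<^sup>2) = 1" using unitary_col vinner_self by metis
  then have "(norm (col Q j))\<^sup>2 = 1" by (simp only: of_real_eq_1_iff)
  then show ?thesis by (metis real_sqrt_one real_sqrt_unique norm_ge_zero)
qed

lemma vinner_adjsq: "vinner x ((cadj X ** X) *v x) = vinner (X *v x) (X *v x)"
  using vinner_adj[of x "cadj X" "X *v x"] by (simp add: matrix_vector_mul_assoc)

lemma psd_alt: "psd P \<longleftrightarrow> hermitian P \<and> (\<forall>x. 0 \<le> Re (vinner x (P *v x)))"
  by (simp add: psd_def vinner_def)

lemma psd_sqrt_eig:
  assumes psd: "psd P" and PP: "P ** P = M" and ev: "M *v v = of_real \<mu> *s v" and mu: "\<mu> \<ge> 0"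
  shows "P *v v = of_real (sqrt \<mu>) *s v"
proof -
  have herm: "hermitian P" and pos: "\<And>x. 0 \<le> Re (vinner x (P *v x))"
    using psd by (auto simp: psd_alt)
  show ?thesis
  proof (cases "\<mu> = 0")
    case True
    have "vinner (P *v v) (P *v v) = vinner v (P *v (P *v v))"
      by (rule herm_vinner[OF herm, symmetric])
    also have "\<dots> = vinner v (M *v v)" by (simp add: matrix_vector_mul_assoc PP)
    also have "\<dots> = 0" using ev True by simp
    finally have "P *v v = 0" by (simp add: vinner_self)
    then show ?thesis using True by simp
  next
    case False
    define s where "s = sqrt \<mu>"
    have s: "s > 0" using False mu by (simp add: s_def)
    have ss: "of_real s * of_real s = (of_real \<mu> :: complex)"
      using mu by (simp add: s_def flip: of_real_mult)
    define w where "w = P *v v - of_real s *s v"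
    have "P *v w + of_real s *s w = M *v v - (of_real s * of_real s) *s v"
      by (simp add: w_def matrix_vector_mult_diff_distrib mv_cscale matrix_vector_mul_assoc PP
          vector_sadd_rdistrib vector_ssub_ldistrib scalar_mult_eq_scaleR algebra_simps)
    also have "\<dots> = 0" using ev ss by simp
    finally have z: "P *v w + of_real s *s w = 0" .
    have "0 = Re (vinner w (P *v w + of_real s *s w))" using z by simp
    also have "\<dots> = Re (vinner w (P *v w)) + s * (norm w)\<^sup>2"
      by (simp add: vinner_add_right vinner_scale_right vinner_self)
    finally have "s * (norm w)\<^sup>2 \<le> 0" using pos[of w] by linarith
    then have "w = 0" using s by (simp add: mult_le_0_iff)
    then show ?thesis by (simp add: w_def s_def)
  qed
qed

lemma unitary_left: "unitary Q \<Longrightarrow> A ** cadj Q ** Q = A"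
  by (simp add: unitary_def flip: matrix_mul_assoc)

lemma unitary_right: "unitary Q \<Longrightarrow> A ** Q ** cadj Q = A"
  by (simp add: unitary_def flip: matrix_mul_assoc)

lemma diag_assoc: "A ** diagm a ** diagm b = A ** diagm (\<chi> i. a $ i * b $ i)"
  by (simp add: diagm_mult flip: matrix_mul_assoc)

lemma diagm_real_adj: "cadj (diagm (\<chi> j. complex_of_real (f j))) = diagm (\<chi> j. complex_of_real (f j))"
  by (simp add: cadj_diagm)

lemma herm_conj:
  "hermitian (Q ** diagm (\<chi> j. complex_of_real (f j)) ** cadj Q)"
  by (simp add: hermitian_def cadj_mult diagm_real_adj matrix_mul_assoc)

lemma vinner_diag: "vinner y (diagm d *v y) = (\<Sum>i\<in>UNIV. d $ i * (cnj (y $ i) * y $ i))"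
proof -
  have "(diagm d *v y) $ i = d $ i * y $ i" for i
    by (simp add: matrix_vector_mult_def if0_mult)
  then show ?thesis by (simp add: vinner_def algebra_simps)
qed

lemma psd_conj:
  assumes "\<And>j. f j \<ge> 0"
  shows "psd (Q ** diagm (\<chi> j. complex_of_real (f j)) ** cadj Q)"
  unfolding psd_alt
proof (intro conjI allI herm_conj)
  fix x
  define y where "y = cadj Q *v x"
  have "vinner x ((Q ** diagm (\<chi> j. complex_of_real (f j)) ** cadj Q) *v x)
        = vinner x (Q *v (diagm (\<chi> j. complex_of_real (f j)) *v y))"
    by (simp add: y_def matrix_vector_mul_assoc matrix_mul_assoc)
  also have "\<dots> = vinner y (diagm (\<chi> j. complex_of_real (f j)) *v y)"
    by (simp add: vinner_adj y_def)
  also have "\<dots> = (\<Sum>i\<in>UNIV. complex_of_real (f i * (cmod (y $ i))\<^sup>2))"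
    by (simp add: vinner_diag complex_norm_square mult.commute del: of_real_power)
  finally show "0 \<le> Re (vinner x ((Q ** diagm (\<chi> j. complex_of_real (f j)) ** cadj Q) *v x))"
    using assms by (simp add: Re_sum sum_nonneg)
qed

lemma trace_conj: "unitary Q \<Longrightarrow> trace (Q ** D ** cadj Q) = trace D"
proof -
  assume Q: "unitary Q"
  have "trace (Q ** D ** cadj Q) = trace (cadj Q ** (Q ** D))" by (rule trace_mul_sym)
  also have "\<dots> = trace D" using Q by (simp add: matrix_mul_assoc unitary_def)
  finally show ?thesis .
qed

lemma trace_diagm: "trace (diagm d) = (\<Sum>i\<in>UNIV. d $ i)"
  by (simp add: trace_def)

definition sqrtm_data :: "complex^'n^'n \<Rightarrow> complex^'n^'n \<Rightarrow> ('n \<Rightarrow> real) \<Rightarrow> bool" where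
  "sqrtm_data X Q \<mu> \<longleftrightarrow> unitary Q \<and> (\<forall>j. \<mu> j \<ge> 0) \<and>
     cadj X ** X = Q ** diagm (\<chi> j. of_real (\<mu> j)) ** cadj Q \<and>
     (\<forall>j. (cadj X ** X) *v col Q j = of_real (\<mu> j) *s col Q j) \<and>
     (THE P. psd P \<and> P ** P = cadj X ** X) = Q ** diagm (\<chi> j. of_real (sqrt (\<mu> j))) ** cadj Q"

lemma sqrtm_exists: "\<exists>Q \<mu>. sqrtm_data X Q \<mu>"
proof -
  let ?M = "cadj X ** X"
  have "hermitian ?M" by (simp add: hermitian_def cadj_mult)
  from spectral[OF this] obtain Q \<mu> where Q: "unitary Q"
    and M: "?M = Q ** diagm (\<chi> j. of_real (\<mu> j)) ** cadj Q"
    and ev: "\<forall>j. ?M *v col Q j = of_real (\<mu> j) *s col Q j" by blast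
  have mu: "\<mu> j \<ge> 0" for j
  proof -
    have "vinner (col Q j) (?M *v col Q j) = of_real (\<mu> j)"
      using ev unitary_col[OF Q] by (simp add: vinner_scale_right)
    moreover have "vinner (col Q j) (?M *v col Q j) = vinner (X *v col Q j) (X *v col Q j)"
      by (rule vinner_adjsq)
    ultimately have "of_real (\<mu> j) = (of_real ((norm (X *v col Q j))\<^sup>2) :: complex)"
      by (simp add: vinner_self)
    then show ?thesis by (metis of_real_eq_iff zero_le_power2)
  qed
  define P0 where "P0 = Q ** diagm (\<chi> j. of_real (sqrt (\<mu> j))) ** cadj Q"
  have psd0: "psd P0" unfolding P0_def by (rule psd_conj) (simp add: mu)
  have sq: "(\<chi> i. complex_of_real (sqrt (\<mu> i)) * complex_of_real (sqrt (\<mu> i))) =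
      (\<chi> j. complex_of_real (\<mu> j))"
    using mu by (simp add: vec_eq_iff flip: of_real_mult)
  have P0P0: "P0 ** P0 = ?M"
    unfolding P0_def M using Q
    by (simp add: matrix_mul_assoc unitary_left diag_assoc sq)
  have uniq: "P = P0" if P: "psd P" "P ** P = ?M" for P
  proof -
    have "P *v col Q j = of_real (sqrt (\<mu> j)) *s col Q j" for j
      by (rule psd_sqrt_eig[OF P(1) P(2)]) (use ev mu in auto)
    then have "P ** Q = Q ** diagm (\<chi> j. of_real (sqrt (\<mu> j)))"
      by (simp add: vec_eq_iff mat_col[of P Q] mat_mult_diagm_nth col_def mult.commute)
    then have "P ** Q ** cadj Q = P0" by (simp add: P0_def)
    then show ?thesis using Q by (simp add: unitary_right)
  qed
  have THE: "(THE P. psd P \<and> P ** P = ?M) = P0"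
  proof (rule the_equality)
    show "psd P0 \<and> P0 ** P0 = ?M" using psd0 P0P0 by (rule conjI)
    fix P assume "psd P \<and> P ** P = ?M"
    then show "P = P0" using uniq by blast
  qed
  show ?thesis unfolding sqrtm_data_def
    by (intro exI[of _ Q] exI[of _ \<mu>] conjI Q allI mu M ev[rule_format] THE[unfolded P0_def])
qed

lemma sqrtm_trace_norm: "sqrtm_data X Q \<mu> \<Longrightarrow> trace_norm X = (\<Sum>j\<in>UNIV. sqrt (\<mu> j))"
proof -
  assume D: "sqrtm_data X Q \<mu>"
  then have Q: "unitary Q"
    and T: "(THE P. psd P \<and> P ** P = cadj X ** X) = Q ** diagm (\<chi> j. of_real (sqrt (\<mu> j))) ** cadj Q"
    unfolding sqrtm_data_def by blast+
  have "trace_norm X = Re (trace (Q ** diagm (\<chi> j. of_real (sqrt (\<mu> j))) ** cadj Q))"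
    unfolding trace_norm_def T ..
  also have "\<dots> = (\<Sum>j\<in>UNIV. sqrt (\<mu> j))"
    using Q by (simp add: trace_conj trace_diagm Re_sum)
  finally show ?thesis .
qed

lemma trace_norm_nonneg: "0 \<le> trace_norm X"
proof -
  obtain Q \<mu> where "sqrtm_data X Q \<mu>" using sqrtm_exists by blast
  then show ?thesis by (auto simp: sqrtm_trace_norm sqrtm_data_def intro!: sum_nonneg)
qed

lemma trace_as_sum: "unitary Q \<Longrightarrow> trace B = (\<Sum>j\<in>UNIV. vinner (col Q j) (B *v col Q j))"
proof -
  assume Q: "unitary Q"
  have "trace B = trace (B ** Q ** cadj Q)" using Q by (simp add: unitary_right)
  also have "\<dots> = trace (cadj Q ** (B ** Q))" by (rule trace_mul_sym)
  also have "\<dots> = trace (cadj Q ** B ** Q)" by (simp add: matrix_mul_assoc)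
  also have "\<dots> = (\<Sum>j\<in>UNIV. vinner (col Q j) (B *v col Q j))"
    by (simp add: trace_def adj_mid)
  finally show ?thesis .
qed

lemma trace_var_le: "Re (trace (U ** X)) \<le> op_norm U * trace_norm X"
proof -
  obtain Q \<mu> where D: "sqrtm_data X Q \<mu>" using sqrtm_exists by blast
  then have Q: "unitary Q" and mu: "\<And>j. \<mu> j \<ge> 0"
    and ev: "\<And>j. (cadj X ** X) *v col Q j = of_real (\<mu> j) *s col Q j"
    by (auto simp: sqrtm_data_def)
  have nx: "norm (X *v col Q j) = sqrt (\<mu> j)" for j
  proof -
    have "vinner (X *v col Q j) (X *v col Q j) = vinner (col Q j) ((cadj X ** X) *v col Q j)"
      by (rule vinner_adjsq[symmetric])
    also have "\<dots> = of_real (\<mu> j)" using ev unitary_col[OF Q] by (simp add: vinner_scale_right)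
    finally have "(norm (X *v col Q j))\<^sup>2 = \<mu> j" by (simp add: vinner_self del: of_real_power)
    then show ?thesis by (simp add: real_sqrt_unique)
  qed
  have trm: "Re (vinner (col Q j) ((U ** X) *v col Q j)) \<le> op_norm U * sqrt (\<mu> j)" for j
  proof -
    have "Re (vinner (col Q j) ((U ** X) *v col Q j)) \<le> cmod (vinner (col Q j) ((U ** X) *v col Q j))"
      by (rule complex_Re_le_cmod)
    also have "\<dots> \<le> norm (col Q j) * norm (U *v (X *v col Q j))"
      by (simp add: vinner_cauchy matrix_vector_mul_assoc)
    also have "\<dots> \<le> op_norm U * norm (X *v col Q j)"
      using unitary_col_norm[OF Q] op_norm_bound by simp
    finally show ?thesis by (simp add: nx)
  qed
  have "Re (trace (U ** X)) = (\<Sum>j\<in>UNIV. Re (vinner (col Q j) ((U ** X) *v col Q j)))"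
    by (simp add: trace_as_sum[OF Q] Re_sum)
  also have "\<dots> \<le> (\<Sum>j\<in>UNIV. op_norm U * sqrt (\<mu> j))" by (rule sum_mono[OF trm])
  also have "\<dots> = op_norm U * trace_norm X"
    by (simp add: sqrtm_trace_norm[OF D] sum_distrib_left)
  finally show ?thesis .
qed

lemma proj_norm:
  assumes "hermitian P" "P ** P = P"
  shows "norm (P *v x) \<le> norm x"
proof -
  have "vinner (P *v x) (x - P *v x) = vinner x (P *v (x - P *v x))"
    by (rule herm_vinner[OF assms(1), symmetric])
  also have "\<dots> = 0"
    by (simp add: matrix_vector_mult_diff_distrib matrix_vector_mul_assoc assms(2))
  finally have o: "vinner (P *v x) (x - P *v x) = 0" .
  have "(norm x)\<^sup>2 = (norm (P *v x + 1 *\<^sub>R (x - P *v x)))\<^sup>2" by simp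
  also have "\<dots> = (norm (P *v x))\<^sup>2 + (norm (x - P *v x))\<^sup>2"
    unfolding expand_norm o by simp
  finally have "(norm (P *v x))\<^sup>2 \<le> (norm x)\<^sup>2" by simp
  then show ?thesis using power2_le_imp_le norm_ge_zero by blast
qed

lemma trace_var_attain: "\<exists>U. op_norm U \<le> 1 \<and> Re (trace (U ** X)) = trace_norm X"
proof -
  obtain Q \<mu> where D: "sqrtm_data X Q \<mu>" using sqrtm_exists by blast
  then have Q: "unitary Q" and mu: "\<And>j. \<mu> j \<ge> 0"
    and M: "cadj X ** X = Q ** diagm (\<chi> j. of_real (\<mu> j)) ** cadj Q"
    by (auto simp: sqrtm_data_def)
  define d where "d j = (if \<mu> j > 0 then 1 / sqrt (\<mu> j) else 0)" for j
  define D' where "D' = diagm (\<chi> j. complex_of_real (d j))"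
  define U where "U = Q ** D' ** cadj Q ** cadj X"
  have e1: "(\<chi> i. complex_of_real (d i) * complex_of_real (\<mu> i)) = (\<chi> j. complex_of_real (sqrt (\<mu> j)))"
  proof -
    have "d i * \<mu> i = sqrt (\<mu> i)" for i
      using mu[of i] by (cases "\<mu> i > 0") (auto simp: d_def real_div_sqrt)
    then show ?thesis by (simp add: vec_eq_iff flip: of_real_mult)
  qed
  have UX: "U ** X = Q ** diagm (\<chi> j. of_real (sqrt (\<mu> j))) ** cadj Q"
  proof -
    have "U ** X = Q ** D' ** cadj Q ** (cadj X ** X)" by (simp add: U_def matrix_mul_assoc)
    also have "\<dots> = Q ** diagm (\<chi> j. of_real (sqrt (\<mu> j))) ** cadj Q"
      unfolding M D'_def using Q by (simp add: matrix_mul_assoc unitary_left diag_assoc e1)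
    finally show ?thesis .
  qed
  have tr: "Re (trace (U ** X)) = trace_norm X"
    unfolding UX using Q by (simp add: trace_conj trace_diagm sqrtm_trace_norm[OF D] Re_sum)
  define P where "P = cadj U ** U"
  have cU: "cadj U = X ** Q ** D' ** cadj Q"
    by (simp add: U_def cadj_mult D'_def diagm_real_adj matrix_mul_assoc)
  have e2: "(\<chi> i. complex_of_real (d i) * complex_of_real (d i) * complex_of_real (\<mu> i) *
       complex_of_real (d i) * complex_of_real (d i)) = (\<chi> i. complex_of_real (d i) * complex_of_real (d i))"
  proof -
    have "d i * d i * \<mu> i * d i * d i = d i * d i" for i
      using mu[of i] by (cases "\<mu> i > 0") (auto simp: d_def field_simps)
    then show ?thesis by (simp add: vec_eq_iff flip: of_real_mult)
  qed
  have PP: "P ** P = P"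
  proof -
    have "P = X ** Q ** D' ** D' ** cadj Q ** cadj X"
      using Q unfolding P_def cU by (simp add: U_def matrix_mul_assoc unitary_left)
    moreover have "X ** Q ** D' ** D' ** cadj Q ** cadj X ** (X ** Q ** D' ** D' ** cadj Q ** cadj X)
       = X ** Q ** D' ** D' ** cadj Q ** (cadj X ** X) ** Q ** D' ** D' ** cadj Q ** cadj X"
      by (simp add: matrix_mul_assoc)
    moreover have "\<dots> = X ** Q ** D' ** D' ** cadj Q ** cadj X"
      unfolding M D'_def using Q by (simp add: matrix_mul_assoc unitary_left diag_assoc e2)
    ultimately show ?thesis by simp
  qed
  have hP: "hermitian P" by (simp add: P_def hermitian_def cadj_mult)
  have "norm (U *v x) \<le> 1 * norm x" for x
  proof -
    have "vinner (U *v x) (U *v x) = vinner x (P *v x)"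
      unfolding P_def by (rule vinner_adjsq[symmetric])
    also have "\<dots> = vinner x (P *v (P *v x))" by (simp add: matrix_vector_mul_assoc PP)
    also have "\<dots> = vinner (P *v x) (P *v x)" by (rule herm_vinner[OF hP])
    finally have "(norm (U *v x))\<^sup>2 = (norm (P *v x))\<^sup>2" by (simp add: vinner_self del: of_real_power)
    then have "norm (U *v x) = norm (P *v x)" by simp
    then show ?thesis using proj_norm[OF hP PP] by simp
  qed
  then have "op_norm U \<le> 1" by (rule op_norm_le)
  with tr show ?thesis by blast
qed

lemma trace_norm_holder: "trace_norm (A ** Y ** B) \<le> op_norm A * op_norm B * trace_norm Y"
proof -
  obtain U where U: "op_norm U \<le> 1" "Re (trace (U ** (A ** Y ** B))) = trace_norm (A ** Y ** B)"
    using trace_var_attain by blast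
  have "trace (U ** (A ** Y ** B)) = trace ((U ** A ** Y) ** B)" by (simp add: matrix_mul_assoc)
  also have "\<dots> = trace (B ** (U ** A ** Y))" by (rule trace_mul_sym)
  also have "\<dots> = trace ((B ** U ** A) ** Y)" by (simp add: matrix_mul_assoc)
  finally have "trace (U ** (A ** Y ** B)) = trace ((B ** U ** A) ** Y)" .
  then have "trace_norm (A ** Y ** B) \<le> op_norm (B ** U ** A) * trace_norm Y"
    using U(2) trace_var_le[of "B ** U ** A" Y] by simp
  also have "op_norm (B ** U ** A) \<le> op_norm B * op_norm U * op_norm A"
  proof -
    have "op_norm (B ** U ** A) \<le> op_norm (B ** U) * op_norm A" by (rule op_norm_mult)
    also have "\<dots> \<le> op_norm B * op_norm U * op_norm A"
      by (intro mult_right_mono op_norm_mult op_norm_nonneg)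
    finally show ?thesis .
  qed
  also have "\<dots> \<le> op_norm B * 1 * op_norm A"
    using U(1) by (intro mult_right_mono mult_left_mono op_norm_nonneg) auto
  finally show ?thesis
    using trace_norm_nonneg[of Y]
    by (simp add: mult_right_mono mult.commute mult.left_commute)
qed

lemma trace_norm_add: "trace_norm (Y + Z) \<le> trace_norm Y + trace_norm Z"
proof -
  obtain U where U: "op_norm U \<le> 1" "Re (trace (U ** (Y + Z))) = trace_norm (Y + Z)"
    using trace_var_attain by blast
  have "Re (trace (U ** (Y + Z))) = Re (trace (U ** Y)) + Re (trace (U ** Z))"
    by (simp add: matrix_add_ldistrib trace_add)
  also have "\<dots> \<le> op_norm U * trace_norm Y + op_norm U * trace_norm Z"
    by (intro add_mono trace_var_le)
  also have "\<dots> \<le> 1 * trace_norm Y + 1 * trace_norm Z"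
    using U(1) trace_norm_nonneg by (intro add_mono mult_right_mono) auto
  finally show ?thesis using U(2) by simp
qed

lemma mat_scaleR_mult: "U ** (c *\<^sub>R Y) = c *\<^sub>R (U ** (Y::complex^'n^'n))"
  by (simp add: vec_eq_iff matrix_matrix_mult_def scaleR_sum_right)

lemma trace_scaleR: "trace (c *\<^sub>R (Y::complex^'n^'n)) = c *\<^sub>R trace Y"
  by (simp add: trace_def scaleR_sum_right)

lemma trace_norm_scaleR: "trace_norm (c *\<^sub>R Y) \<le> \<bar>c\<bar> * trace_norm Y"
proof -
  obtain U where U: "op_norm U \<le> 1" "Re (trace (U ** (c *\<^sub>R Y))) = trace_norm (c *\<^sub>R Y)"
    using trace_var_attain by blast
  have "Re (trace (U ** (c *\<^sub>R Y))) = Re (trace ((c *\<^sub>R U) ** Y))"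
    by (simp add: mat_scaleR_mult vec_eq_iff matrix_matrix_mult_def scaleR_sum_right trace_def
        sum_distrib_left)
  also have "\<dots> \<le> op_norm (c *\<^sub>R U) * trace_norm Y" by (rule trace_var_le)
  also have "\<dots> \<le> (\<bar>c\<bar> * op_norm U) * trace_norm Y"
    by (intro mult_right_mono op_norm_scaleR trace_norm_nonneg)
  also have "\<dots> \<le> (\<bar>c\<bar> * 1) * trace_norm Y"
    using U(1) by (intro mult_right_mono mult_left_mono trace_norm_nonneg) auto
  finally show ?thesis using U(2) by simp
qed

lemma trace_norm_diff: "trace_norm (Y - Z) \<le> trace_norm Y + trace_norm Z"
proof -
  have "trace_norm (Y - Z) = trace_norm (Y + (-1) *\<^sub>R Z)" by simp
  also have "\<dots> \<le> trace_norm Y + trace_norm ((-1) *\<^sub>R Z)" by (rule trace_norm_add)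
  also have "trace_norm ((-1) *\<^sub>R Z) \<le> trace_norm Z" using trace_norm_scaleR[of "-1" Z] by simp
  finally show ?thesis by simp
qed

lemma trace_norm_zero: "trace_norm (0::complex^'n^'n) = 0"
  using trace_norm_scaleR[of 0 "0::complex^'n^'n"] trace_norm_nonneg[of "0::complex^'n^'n"] by simp

lemma trace_norm_sum: "trace_norm (\<Sum>s\<in>S. f s) \<le> (\<Sum>s\<in>S. trace_norm (f s))"
proof (induction S rule: infinite_finite_induct)
  case (infinite A)
  then show ?case by (simp add: trace_norm_zero)
next
  case empty
  then show ?case by (simp add: trace_norm_zero)
next
  case (insert x F)
  then show ?case using trace_norm_add[of "f x" "sum f F"] by simp
qed

definition conjd :: "complex^'n^'n \<Rightarrow> complex^'n \<Rightarrow> complex^'n^'n" where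
  "conjd Q z = Q ** diagm z ** cadj Q"

lemma conjd_nth: "conjd Q z $ a $ b = (\<Sum>k\<in>UNIV. Q $ a $ k * z $ k * cnj (Q $ b $ k))"
  by (simp add: conjd_def matrix_matrix_mult_def[of "Q ** diagm z"] mat_mult_diagm_nth)

lemma conjd_add: "conjd Q (a + b) = conjd Q a + conjd Q b"
  by (simp add: vec_eq_iff conjd_nth algebra_simps sum.distrib)

lemma conjd_diff: "conjd Q (a - b) = conjd Q a - conjd Q b"
  by (simp add: vec_eq_iff conjd_nth algebra_simps sum_subtractf)

lemma conjd_scaleR: "conjd Q (c *\<^sub>R a) = c *\<^sub>R conjd Q a"
  by (simp add: vec_eq_iff conjd_nth scaleR_sum_right)

lemma linear_conjd: "linear (conjd Q)"
  by (rule linearI) (simp_all add: conjd_add conjd_scaleR)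

lemma bounded_linear_conjd: "bounded_linear (conjd Q)"
  using linear_conjd linear_conv_bounded_linear by blast

lemma conjd_one: "unitary Q \<Longrightarrow> conjd Q (\<chi> i. 1) = mat 1"
  by (simp add: conjd_def diagm_one unitary_def)

lemma cscale_conjd: "cscale c (conjd Q z) = conjd Q (\<chi> i. c * z $ i)"
  by (simp add: vec_eq_iff conjd_nth sum_distrib_left mult.assoc mult.left_commute)

lemma conjd_mult: "unitary Q \<Longrightarrow> conjd Q a ** conjd Q b = conjd Q (\<chi> i. a $ i * b $ i)"
  by (simp add: conjd_def matrix_mul_assoc unitary_left diag_assoc)

lemma mpow_conj: "unitary Q \<Longrightarrow> mpow (conjd Q z) k = conjd Q (\<chi> i. z $ i ^ k)"
proof (induction k)
  case 0
  then show ?case by (simp add: conjd_one)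
next
  case (Suc k)
  then show ?case by (simp add: conjd_mult)
qed

lemma mexp_conj:
  assumes Q: "unitary Q"
  shows "mexp (conjd Q z) = conjd Q (\<chi> i. exp (z $ i))"
proof -
  have s1: "(\<lambda>k. (\<chi> i. z $ i ^ k /\<^sub>R fact k)) sums (\<chi> i. exp (z $ i))"
  proof -
    have "(\<lambda>n. \<Sum>k<n. (\<chi> i. z $ i ^ k /\<^sub>R fact k)) = (\<lambda>n. \<chi> i. \<Sum>k<n. z $ i ^ k /\<^sub>R fact k)"
      by (rule ext) (simp add: vec_eq_iff)
    moreover have "((\<lambda>n. \<chi> i. \<Sum>k<n. z $ i ^ k /\<^sub>R fact k) \<longlongrightarrow> (\<chi> i. exp (z $ i))) sequentially"
      by (intro tendsto_vec_lambda) (use exp_converges in \<open>simp add: sums_def\<close>)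
    ultimately show ?thesis by (simp add: sums_def)
  qed
  have s2: "(\<lambda>k. conjd Q (\<chi> i. z $ i ^ k /\<^sub>R fact k)) sums conjd Q (\<chi> i. exp (z $ i))"
    by (rule bounded_linear.sums[OF bounded_linear_conjd s1])
  have "conjd Q (\<chi> i. z $ i ^ k /\<^sub>R fact k) = (1 / fact k) *\<^sub>R mpow (conjd Q z) k" for k
  proof -
    have "(\<chi> i. z $ i ^ k /\<^sub>R fact k) = (1 / fact k) *\<^sub>R (\<chi> i. z $ i ^ k)"
      by (simp add: vec_eq_iff inverse_eq_divide)
    then show ?thesis by (simp add: conjd_scaleR mpow_conj[OF Q])
  qed
  with s2 have "(\<lambda>k. (1 / fact k) *\<^sub>R mpow (conjd Q z) k) sums conjd Q (\<chi> i. exp (z $ i))"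
    by simp
  then show ?thesis unfolding mexp_def by (rule sums_unique[symmetric])
qed

lemma isometry: "cadj Q ** Q = mat 1 \<Longrightarrow> norm (Q *v y) = norm y"
proof -
  assume QQ: "cadj Q ** Q = mat 1"
  have "vinner (Q *v y) (Q *v y) = vinner y y"
    using vinner_adjsq[of y Q] QQ by simp
  then have "(norm (Q *v y))\<^sup>2 = (norm y)\<^sup>2" by (simp add: vinner_self del: of_real_power)
  then show ?thesis by simp
qed

lemma norm_cscale: "norm (c *s (y::complex^'n)) = cmod c * norm y"
  by (simp add: norm_vec_def norm_mult L2_set_right_distrib)

lemma norm_diagm: assumes "\<And>i. cmod (z $ i) \<le> B" shows "norm (diagm z *v y) \<le> B * norm y"
proof -
  have B: "0 \<le> B" using assms[of undefined] norm_ge_zero order_trans by blast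
  have e: "(diagm z *v y) $ i = z $ i * y $ i" for i
    by (simp add: matrix_vector_mult_def if0_mult)
  have "norm (diagm z *v y) = L2_set (\<lambda>i. cmod (z $ i * y $ i)) UNIV"
    by (simp add: norm_vec_def e)
  also have "\<dots> \<le> L2_set (\<lambda>i. B * cmod (y $ i)) UNIV"
    by (rule L2_set_mono) (simp_all add: norm_mult assms mult_right_mono)
  also have "\<dots> = B * norm y"
    using B by (simp add: norm_vec_def L2_set_right_distrib)
  finally show ?thesis .
qed

lemma op_norm_conjd:
  assumes Q: "unitary Q" and b: "\<And>i. cmod (z $ i) \<le> B"
  shows "op_norm (conjd Q z) \<le> B"
proof (rule op_norm_le)
  fix x
  have "norm (conjd Q z *v x) = norm (Q *v (diagm z *v (cadj Q *v x)))"
    by (simp add: conjd_def matrix_vector_mul_assoc matrix_mul_assoc)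
  also have "\<dots> = norm (diagm z *v (cadj Q *v x))"
    using Q by (simp add: isometry unitary_def)
  also have "\<dots> \<le> B * norm (cadj Q *v x)" by (rule norm_diagm[OF b])
  also have "norm (cadj Q *v x) = norm x"
    using Q by (intro isometry) (simp add: unitary_def)
  finally show "norm (conjd Q z *v x) \<le> B * norm x" .
qed

lemma iexp_bound0: "cmod (iexp x - 1) \<le> \<bar>x\<bar>"
  using iexp_approx1[of x 0] by simp

lemma iexp_bound1: "cmod (iexp x - 1 - \<i> * of_real x) \<le> x\<^sup>2 / 2"
  using iexp_approx1[of x 1] by (simp add: power2_eq_square diff_diff_eq)

lemma herm_spectral_bound:
  assumes herm: "hermitian H" and nrm: "op_norm H \<le> 1"
  shows "\<exists>Q lam. unitary Q \<and> H = conjd Q (\<chi> j. complex_of_real (lam j)) \<and> (\<forall>j. \<bar>lam j\<bar> \<le> 1)"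
proof -
  obtain Q lam where Q: "unitary Q" and H: "H = Q ** diagm (\<chi> j. of_real (lam j)) ** cadj Q"
    and ev: "\<And>j. H *v col Q j = of_real (lam j) *s col Q j"
    using spectral[OF herm] by blast
  have "\<bar>lam j\<bar> \<le> 1" for j
  proof -
    have "\<bar>lam j\<bar> = norm (H *v col Q j)"
      using unitary_col_norm[OF Q] by (simp add: ev norm_cscale)
    also have "\<dots> \<le> op_norm H * norm (col Q j)" by (rule op_norm_bound)
    also have "\<dots> \<le> 1" using nrm unitary_col_norm[OF Q] by simp
    finally show ?thesis .
  qed
  then show ?thesis using Q H unfolding conjd_def by blast
qed

lemma exp_estimates:
  assumes herm: "hermitian H" and nrm: "op_norm H \<le> 1"
  shows "op_norm (mexp (cscale (- \<i> * of_real \<tau>) H)) \<le> 1"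
    and "op_norm (mexp (cscale (- \<i> * of_real \<tau>) H) - mat 1) \<le> \<bar>\<tau>\<bar>"
    and "op_norm (mexp (cscale (- \<i> * of_real \<tau>) H) - mat 1 + cscale (\<i> * of_real \<tau>) H) \<le> \<tau>\<^sup>2 / 2"
proof -
  obtain Q lam where Q: "unitary Q" and H: "H = conjd Q (\<chi> j. complex_of_real (lam j))"
    and lb: "\<And>j. \<bar>lam j\<bar> \<le> 1"
    using herm_spectral_bound[OF herm nrm] by blast
  have ex: "mexp (cscale (- \<i> * of_real \<tau>) H) = conjd Q (\<chi> j. iexp (- \<tau> * lam j))"
    unfolding H cscale_conjd mexp_conj[OF Q] by (simp add: algebra_simps)
  have ab: "\<bar>\<tau> * lam j\<bar> \<le> \<bar>\<tau>\<bar>" for j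
    using lb[of j] by (simp add: abs_mult mult_left_le)
  show "op_norm (mexp (cscale (- \<i> * of_real \<tau>) H)) \<le> 1"
    unfolding ex by (rule op_norm_conjd[OF Q]) simp
  show "op_norm (mexp (cscale (- \<i> * of_real \<tau>) H) - mat 1) \<le> \<bar>\<tau>\<bar>"
  proof -
    have veq: "(\<chi> j. iexp (- \<tau> * lam j)) - (\<chi> i. 1) = (\<chi> j. iexp (- \<tau> * lam j) - 1)"
      by (simp add: vec_eq_iff)
    have "mexp (cscale (- \<i> * of_real \<tau>) H) - mat 1 = conjd Q (\<chi> j. iexp (- \<tau> * lam j) - 1)"
      unfolding ex conjd_one[OF Q, symmetric] conjd_diff[symmetric] veq ..
    also have "op_norm \<dots> \<le> \<bar>\<tau>\<bar>"
    proof (rule op_norm_conjd[OF Q])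
      fix j
      have "cmod (iexp (- \<tau> * lam j) - 1) \<le> \<bar>- \<tau> * lam j\<bar>" by (rule iexp_bound0)
      then show "cmod ((\<chi> j. iexp (- \<tau> * lam j) - 1) $ j) \<le> \<bar>\<tau>\<bar>" using ab[of j] by simp
    qed
    finally show ?thesis .
  qed
  show "op_norm (mexp (cscale (- \<i> * of_real \<tau>) H) - mat 1 + cscale (\<i> * of_real \<tau>) H) \<le> \<tau>\<^sup>2 / 2"
  proof -
    have veq: "(\<chi> j. iexp (- \<tau> * lam j)) - (\<chi> i. 1) + (\<chi> j. \<i> * of_real \<tau> * of_real (lam j)) =
        (\<chi> j. iexp (- \<tau> * lam j) - 1 - \<i> * of_real (- \<tau> * lam j))"
      by (simp add: vec_eq_iff)
    have "mexp (cscale (- \<i> * of_real \<tau>) H) - mat 1 + cscale (\<i> * of_real \<tau>) H =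
        conjd Q ((\<chi> j. iexp (- \<tau> * lam j)) - (\<chi> i. 1) + (\<chi> j. \<i> * of_real \<tau> * of_real (lam j)))"
      unfolding ex unfolding H cscale_conjd conjd_one[OF Q, symmetric] conjd_diff[symmetric] conjd_add[symmetric] vec_lambda_beta ..
    also have "\<dots> = conjd Q (\<chi> j. iexp (- \<tau> * lam j) - 1 - \<i> * of_real (- \<tau> * lam j))"
      unfolding veq ..
    also have "op_norm \<dots> \<le> \<tau>\<^sup>2 / 2"
    proof (rule op_norm_conjd[OF Q])
      fix j
      have "cmod (iexp (- \<tau> * lam j) - 1 - \<i> * of_real (- \<tau> * lam j)) \<le> (- \<tau> * lam j)\<^sup>2 / 2"
        by (rule iexp_bound1)
      also have "(- \<tau> * lam j)\<^sup>2 \<le> \<tau>\<^sup>2"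
        using ab[of j] by (metis abs_le_square_iff abs_minus_cancel minus_mult_left)
      finally show "cmod ((\<chi> j. iexp (- \<tau> * lam j) - 1 - \<i> * of_real (- \<tau> * lam j)) $ j) \<le> \<tau>\<^sup>2 / 2"
        by simp
    qed
    finally show ?thesis .
  qed
qed

lemma mm_add_r: "(A + B) ** C = A ** C + B ** (C::complex^'n^'n)"
  by (simp add: vec_eq_iff matrix_matrix_mult_def sum.distrib algebra_simps)

lemma mm_diff_r: "(A - B) ** C = A ** C - B ** (C::complex^'n^'n)"
  by (simp add: vec_eq_iff matrix_matrix_mult_def sum_subtractf algebra_simps)

lemma mm_diff_l: "C ** (A - B) = C ** A - C ** (B::complex^'n^'n)"
  by (simp add: vec_eq_iff matrix_matrix_mult_def sum_subtractf algebra_simps)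

lemma cscale_mm_l: "cscale c A ** B = cscale c (A ** (B::complex^'n^'n))"
  by (simp add: vec_eq_iff matrix_matrix_mult_def sum_distrib_left algebra_simps)

lemma cscale_mm_r: "A ** cscale c B = cscale c (A ** (B::complex^'n^'n))"
  by (simp add: vec_eq_iff matrix_matrix_mult_def sum_distrib_left algebra_simps)

lemma cscale_diff: "cscale c (A - B) = cscale c A - cscale c (B::complex^'n^'n)"
  by (simp add: vec_eq_iff algebra_simps)

lemma cscale_add: "cscale c (A + B) = cscale c A + cscale c (B::complex^'n^'n)"
  by (simp add: vec_eq_iff algebra_simps)

lemma cscale_scaleR: "cscale c (r *\<^sub>R A) = r *\<^sub>R cscale c (A::complex^'n^'n)"
  by (simp add: vec_eq_iff scaleR_conv_of_real algebra_simps)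

lemma scaleR_mm_l: "(r *\<^sub>R A) ** B = r *\<^sub>R (A ** (B::complex^'n^'n))"
  by (simp add: vec_eq_iff matrix_matrix_mult_def scaleR_sum_right)

lemma scaleR_mm_r: "A ** (r *\<^sub>R B) = r *\<^sub>R (A ** (B::complex^'n^'n))"
  by (simp add: vec_eq_iff matrix_matrix_mult_def scaleR_sum_right)

lemma op_norm_one: "op_norm (mat 1 :: complex^'n^'n) \<le> 1"
  by (rule op_norm_le) simp

lemma op_norm_zero: "op_norm (0 :: complex^'n^'n) = 0"
proof -
  have "op_norm (0 :: complex^'n^'n) \<le> 0" by (rule op_norm_le) simp
  then show ?thesis using op_norm_nonneg[of "0 :: complex^'n^'n"] by simp
qed

lemma op_norm_sum: "op_norm (\<Sum>s\<in>S. f s :: complex^'n^'n) \<le> (\<Sum>s\<in>S. op_norm (f s))"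
proof (induction S rule: infinite_finite_induct)
  case (insert x F)
  then show ?case using op_norm_add[of "f x" "sum f F"] by simp
qed (simp_all add: op_norm_zero)

lemma cadj_sum: "cadj (\<Sum>s\<in>S. f s) = (\<Sum>s\<in>S. cadj (f s))"
  by (induction S rule: infinite_finite_induct) (simp_all add: cadj_add vec_eq_iff)

section \<open>Lifting to the tensor product with the identity\<close>

definition lift :: "complex^'n^'n \<Rightarrow> complex^('n\<times>'n)^('n\<times>'n)" where
  "lift A = (\<chi> p q. A $ fst p $ fst q * (if snd p = snd q then 1 else 0))"

lemma sum_pair: "(\<Sum>p\<in>(UNIV::('a::finite\<times>'b::finite) set). f p) = (\<Sum>a\<in>UNIV. \<Sum>b\<in>UNIV. f (a, b))"
  by (simp add: sum.cartesian_product)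

lemma liftL: "(lift A ** Y) $ p $ s = (\<Sum>k\<in>UNIV. A $ fst p $ k * Y $ (k, snd p) $ s)"
proof -
  have "(lift A ** Y) $ p $ s = (\<Sum>k\<in>UNIV. \<Sum>b\<in>UNIV. A $ fst p $ k * (if snd p = b then 1 else 0) * Y $ (k, b) $ s)"
    by (simp add: matrix_matrix_mult_def lift_def sum_pair)
  also have "\<dots> = (\<Sum>k\<in>UNIV. A $ fst p $ k * Y $ (k, snd p) $ s)"
    by (simp add: if0_mult mult_if0)
  finally show ?thesis .
qed

lemma liftR: "(Y ** lift B) $ r $ q = (\<Sum>l\<in>UNIV. Y $ r $ (l, snd q) * B $ l $ fst q)"
proof -
  have "(Y ** lift B) $ r $ q = (\<Sum>l\<in>UNIV. \<Sum>c\<in>UNIV. Y $ r $ (l, c) * (B $ l $ fst q * (if c = snd q then 1 else 0)))"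
    by (simp add: matrix_matrix_mult_def lift_def sum_pair)
  also have "\<dots> = (\<Sum>l\<in>UNIV. Y $ r $ (l, snd q) * B $ l $ fst q)"
    by (simp add: if0_mult mult_if0)
  finally show ?thesis .
qed

lemma tensor_conj: "tensor_id (\<lambda>\<rho>. A ** \<rho> ** B) X = lift A ** X ** lift B"
proof -
  have "tensor_id (\<lambda>\<rho>. A ** \<rho> ** B) X $ p $ q = (lift A ** X ** lift B) $ p $ q" for p q
  proof -
    have "tensor_id (\<lambda>\<rho>. A ** \<rho> ** B) X $ p $ q =
      (\<Sum>l\<in>UNIV. (\<Sum>k\<in>UNIV. A $ fst p $ k * X $ (k, snd p) $ (l, snd q)) * B $ l $ fst q)"
      by (simp add: tensor_id_def matrix_matrix_mult_def)
    also have "\<dots> = (lift A ** X ** lift B) $ p $ q"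
      by (simp add: liftR liftL)
    finally show ?thesis .
  qed
  then show ?thesis by (simp add: vec_eq_iff)
qed

lemma norm_sq_vec: "(norm (v::complex^'m))\<^sup>2 = (\<Sum>p\<in>UNIV. (cmod (v $ p))\<^sup>2)"
  by (simp add: norm_vec_def L2_set_def sum_nonneg)

lemma op_norm_lift: "op_norm (lift A) \<le> op_norm A"
proof (rule op_norm_le)
  fix x :: "complex^('a\<times>'a)"
  define xb where "xb b = (\<chi> k. x $ (k, b))" for b
  have e: "(lift A *v x) $ (i, b) = (A *v xb b) $ i" for i b
  proof -
    have "(lift A *v x) $ (i, b) = (\<Sum>k\<in>UNIV. \<Sum>c\<in>UNIV. A $ i $ k * (if b = c then 1 else 0) * x $ (k, c))"
      by (simp add: matrix_vector_mult_def lift_def sum_pair)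
    also have "\<dots> = (A *v xb b) $ i"
      by (simp add: if0_mult mult_if0 matrix_vector_mult_def xb_def)
    finally show ?thesis .
  qed
  have nx: "(\<Sum>b\<in>UNIV. (norm (xb b))\<^sup>2) = (norm x)\<^sup>2"
  proof -
    have "(\<Sum>b\<in>UNIV. (norm (xb b))\<^sup>2) = (\<Sum>b\<in>UNIV. \<Sum>a\<in>UNIV. (cmod (x $ (a, b)))\<^sup>2)"
      by (simp only: norm_sq_vec xb_def vec_lambda_beta)
    also have "\<dots> = (\<Sum>a\<in>UNIV. \<Sum>b\<in>UNIV. (cmod (x $ (a, b)))\<^sup>2)"
      by (rule sum.swap)
    also have "\<dots> = (norm x)\<^sup>2"
      by (simp only: norm_sq_vec sum_pair)
    finally show ?thesis .
  qed
  have "(norm (lift A *v x))\<^sup>2 = (\<Sum>a\<in>UNIV. \<Sum>b\<in>UNIV. (cmod ((lift A *v x) $ (a, b)))\<^sup>2)"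
    by (simp only: norm_sq_vec sum_pair)
  also have "\<dots> = (\<Sum>a\<in>UNIV. \<Sum>b\<in>UNIV. (cmod ((A *v xb b) $ a))\<^sup>2)"
    by (simp only: e)
  also have "\<dots> = (\<Sum>b\<in>UNIV. \<Sum>a\<in>UNIV. (cmod ((A *v xb b) $ a))\<^sup>2)"
    by (rule sum.swap)
  also have "\<dots> = (\<Sum>b\<in>UNIV. (norm (A *v xb b))\<^sup>2)"
    by (simp only: norm_sq_vec)
  also have "\<dots> \<le> (\<Sum>b\<in>UNIV. (op_norm A * norm (xb b))\<^sup>2)"
    by (intro sum_mono power_mono op_norm_bound) simp
  also have "\<dots> = (op_norm A)\<^sup>2 * (\<Sum>b\<in>UNIV. (norm (xb b))\<^sup>2)"
    by (simp add: power_mult_distrib sum_distrib_left)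
  also have "\<dots> = (op_norm A)\<^sup>2 * (norm x)\<^sup>2" by (simp only: nx)
  finally have "(norm (lift A *v x))\<^sup>2 \<le> (op_norm A * norm x)\<^sup>2"
    by (simp only: power_mult_distrib)
  then show "norm (lift A *v x) \<le> op_norm A * norm x"
    by (rule power2_le_imp_le) (simp add: op_norm_nonneg)
qed

lemma tensor_add: "tensor_id (\<lambda>\<rho>. f \<rho> + g \<rho>) X = tensor_id f X + tensor_id g X"
  by (simp add: tensor_id_def vec_eq_iff)

lemma tensor_diff: "tensor_id (\<lambda>\<rho>. f \<rho> - g \<rho>) X = tensor_id f X - tensor_id g X"
  by (simp add: tensor_id_def vec_eq_iff)

lemma tensor_scaleR: "tensor_id (\<lambda>\<rho>. c *\<^sub>R f \<rho>) X = c *\<^sub>R tensor_id f X"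
  by (simp add: tensor_id_def vec_eq_iff)

lemma tensor_sum: "tensor_id (\<lambda>\<rho>. \<Sum>s\<in>S. f s \<rho>) X = (\<Sum>s\<in>S. tensor_id (f s) X)"
  by (simp add: tensor_id_def vec_eq_iff)

lemma tensor_comp: "tensor_id (\<lambda>\<rho>. f (g \<rho>)) X = tensor_id f (tensor_id g X)"
  by (simp add: tensor_id_def vec_eq_iff)

lemma tensor_funpow: "tensor_id (f ^^ N) X = (tensor_id f ^^ N) X"
proof (induction N arbitrary: X)
  case 0
  then show ?case by (simp add: tensor_id_def vec_eq_iff)
next
  case (Suc N)
  have "tensor_id (f ^^ Suc N) X = tensor_id (\<lambda>\<rho>. f ((f ^^ N) \<rho>)) X"
    unfolding funpow.simps comp_def ..
  also have "\<dots> = tensor_id f (tensor_id (f ^^ N) X)" by (rule tensor_comp)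
  also have "\<dots> = tensor_id f ((tensor_id f ^^ N) X)" by (simp only: Suc.IH)
  also have "\<dots> = (tensor_id f ^^ Suc N) X" by simp
  finally show ?case .
qed

definition blk :: "complex^('n\<times>'n)^('n\<times>'n) \<Rightarrow> 'n \<Rightarrow> 'n \<Rightarrow> complex^'n^'n" where
  "blk X b c = (\<chi> i j. X $ (i, b) $ (j, c))"

lemma tensor_id_blk: "tensor_id f X = (\<chi> p q. f (blk X (snd p) (snd q)) $ fst p $ fst q)"
  by (simp add: tensor_id_def blk_def)

lemma blk_diff: "blk (X - Y) b c = blk X b c - blk Y b c"
  by (simp add: blk_def vec_eq_iff)

lemma tensor_additive:
  assumes "\<And>a b. f (a - b) = f a - f b"
  shows "tensor_id f (X - Y) = tensor_id f X - tensor_id f Y"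
  unfolding tensor_id_blk blk_diff assms by (simp add: vec_eq_iff)

section \<open>One-step estimates\<close>

definition conjm :: "complex^'n^'n \<Rightarrow> complex^'n^'n \<Rightarrow> complex^'n^'n \<Rightarrow> complex^'n^'n" where
  "conjm A B \<rho> = A ** \<rho> ** B"

lemma trace_norm_tensor_conjm:
  "trace_norm (tensor_id (conjm A B) Y) \<le> op_norm A * op_norm B * trace_norm Y"
proof -
  have "tensor_id (conjm A B) Y = lift A ** Y ** lift B"
    unfolding conjm_def by (rule tensor_conj)
  also have "trace_norm \<dots> \<le> op_norm (lift A) * op_norm (lift B) * trace_norm Y"
    by (rule trace_norm_holder)
  also have "\<dots> \<le> op_norm A * op_norm B * trace_norm Y"
    by (intro mult_right_mono mult_mono op_norm_lift op_norm_nonneg trace_norm_nonneg)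
  finally show ?thesis .
qed

definition Uf :: "real \<Rightarrow> complex^'n^'n \<Rightarrow> complex^'n^'n" where
  "Uf \<tau> H = mexp (cscale (- \<i> * of_real \<tau>) H)"

definition Df :: "real \<Rightarrow> complex^'n^'n \<Rightarrow> complex^'n^'n \<Rightarrow> complex^'n^'n" where
  "Df \<tau> H \<rho> = Uf \<tau> H ** \<rho> ** Uf (- \<tau>) H - \<rho> + cscale (\<i> * of_real \<tau>) (H ** \<rho> - \<rho> ** H)"

lemma Uf_neg: "Uf (- \<tau>) H = mexp (cscale (\<i> * of_real \<tau>) H)"
  by (simp add: Uf_def)

lemma Df_decomp:
  "Df \<tau> H \<rho> = conjm (Uf \<tau> H - mat 1 + cscale (\<i> * of_real \<tau>) H) (mat 1) \<rho>
     + conjm (mat 1) (Uf (- \<tau>) H - mat 1 + cscale (\<i> * of_real (- \<tau>)) H) \<rho>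
     + conjm (Uf \<tau> H - mat 1) (Uf (- \<tau>) H - mat 1) \<rho>"
proof -
  have c: "cscale (\<i> * of_real (- \<tau>)) H = - cscale (\<i> * of_real \<tau>) H"
    by (simp add: vec_eq_iff)
  show ?thesis
    unfolding Df_def conjm_def c
    by (simp add: mm_add_r mm_diff_r mm_diff_l matrix_add_ldistrib cscale_mm_l cscale_mm_r
        cscale_diff matrix_mul_assoc vec_eq_iff algebra_simps)
qed

lemma Df_bound:
  assumes herm: "hermitian H" and nrm: "op_norm H \<le> 1"
  shows "trace_norm (tensor_id (Df \<tau> H) Y) \<le> 2 * \<tau>\<^sup>2 * trace_norm Y"
proof -
  note e1 = exp_estimates[OF herm nrm, of \<tau>, folded Uf_def]
  note e2 = exp_estimates[OF herm nrm, of "- \<tau>", folded Uf_def]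
  define A1 where "A1 = Uf \<tau> H - mat 1 + cscale (\<i> * of_real \<tau>) H"
  define A2 where "A2 = Uf (- \<tau>) H - mat 1 + cscale (\<i> * of_real (- \<tau>)) H"
  define A3 where "A3 = Uf \<tau> H - mat 1"
  define A4 where "A4 = Uf (- \<tau>) H - mat 1"
  have nA1: "op_norm A1 \<le> \<tau>\<^sup>2 / 2" using e1(3) by (simp add: A1_def)
  have nA2: "op_norm A2 \<le> \<tau>\<^sup>2 / 2" using e2(3) by (simp add: A2_def)
  have nA3: "op_norm A3 \<le> \<bar>\<tau>\<bar>" using e1(2) by (simp add: A3_def)
  have nA4: "op_norm A4 \<le> \<bar>\<tau>\<bar>" using e2(2) by (simp add: A4_def)
  have "tensor_id (Df \<tau> H) Y = tensor_id (conjm A1 (mat 1)) Y + tensor_id (conjm (mat 1) A2) Y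
      + tensor_id (conjm A3 A4) Y"
    unfolding Df_decomp A1_def A2_def A3_def A4_def tensor_add ..
  also have "trace_norm \<dots> \<le> trace_norm (tensor_id (conjm A1 (mat 1)) Y)
      + trace_norm (tensor_id (conjm (mat 1) A2) Y) + trace_norm (tensor_id (conjm A3 A4) Y)"
    by (meson add_mono order_trans order_refl trace_norm_add)
  also have "\<dots> \<le> (\<tau>\<^sup>2 / 2) * 1 * trace_norm Y + 1 * (\<tau>\<^sup>2 / 2) * trace_norm Y
      + \<bar>\<tau>\<bar> * \<bar>\<tau>\<bar> * trace_norm Y"
  proof (intro add_mono)
    show "trace_norm (tensor_id (conjm A1 (mat 1)) Y) \<le> (\<tau>\<^sup>2 / 2) * 1 * trace_norm Y"
      by (rule order_trans[OF trace_norm_tensor_conjm])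
        (intro mult_right_mono mult_mono nA1 op_norm_one op_norm_nonneg trace_norm_nonneg; simp)
    show "trace_norm (tensor_id (conjm (mat 1) A2) Y) \<le> 1 * (\<tau>\<^sup>2 / 2) * trace_norm Y"
      by (rule order_trans[OF trace_norm_tensor_conjm])
        (intro mult_right_mono mult_mono nA2 op_norm_one op_norm_nonneg trace_norm_nonneg; simp)
    show "trace_norm (tensor_id (conjm A3 A4) Y) \<le> \<bar>\<tau>\<bar> * \<bar>\<tau>\<bar> * trace_norm Y"
      by (rule order_trans[OF trace_norm_tensor_conjm])
        (intro mult_right_mono mult_mono nA3 nA4 op_norm_nonneg trace_norm_nonneg; simp)
  qed
  also have "\<dots> = 2 * \<tau>\<^sup>2 * trace_norm Y"
    by (simp add: power2_eq_square algebra_simps abs_mult_self_eq)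
  finally show ?thesis .
qed

lemma mm_zero_l: "0 ** (B::complex^'n^'n) = 0"
  by (simp add: vec_eq_iff matrix_matrix_mult_def)

lemma mm_zero_r: "(B::complex^'n^'n) ** 0 = 0"
  by (simp add: vec_eq_iff matrix_matrix_mult_def)

lemma sum_mm_l: "(\<Sum>s\<in>S. f s) ** (B::complex^'n^'n) = (\<Sum>s\<in>S. f s ** B)"
  by (induction S rule: infinite_finite_induct) (simp_all add: mm_add_r mm_zero_l)

lemma sum_mm_r: "(B::complex^'n^'n) ** (\<Sum>s\<in>S. f s) = (\<Sum>s\<in>S. B ** f s)"
  by (induction S rule: infinite_finite_induct) (simp_all add: matrix_add_ldistrib mm_zero_r)

lemma cscale_sum: "cscale c (\<Sum>s\<in>S. f s :: complex^'n^'n) = (\<Sum>s\<in>S. cscale c (f s))"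
  by (induction S rule: infinite_finite_induct) (simp_all add: cscale_add vec_eq_iff)

lemma mpow_Suc_right: "mpow A (Suc k) = mpow A k ** A"
  by (induction k) (simp_all add: matrix_mul_assoc)

lemma unitary_evol_conjm: "unitary_evol H \<tau> \<rho> = conjm (Uf \<tau> H) (Uf (- \<tau>) H) \<rho>"
  by (simp add: unitary_evol_def conjm_def Uf_def)

lemma conjm_funpow: "(conjm A B ^^ N) \<rho> = mpow A N ** \<rho> ** mpow B N"
proof (induction N)
  case 0
  then show ?case by simp
next
  case (Suc N)
  have "(conjm A B ^^ Suc N) \<rho> = conjm A B ((conjm A B ^^ N) \<rho>)" by simp
  also have "\<dots> = A ** (mpow A N ** \<rho> ** mpow B N) ** B"
    by (simp only: Suc.IH conjm_def)
  also have "\<dots> = mpow A (Suc N) ** \<rho> ** mpow B (Suc N)"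
    by (simp only: mpow_Suc_right[of B N]) (simp add: matrix_mul_assoc)
  finally show ?case .
qed

lemma mexp_herm: "unitary Q \<Longrightarrow>
  mexp (cscale c (conjd Q (\<chi> j. complex_of_real (lam j)))) = conjd Q (\<chi> j. exp (c * of_real (lam j)))"
  by (simp add: cscale_conjd mexp_conj)

lemma mpow_conjd_exp: "unitary Q \<Longrightarrow>
  mpow (conjd Q (\<chi> j. exp (z j))) N = conjd Q (\<chi> j. exp (of_nat N * z j))"
  by (simp add: mpow_conj exp_of_nat_mult)

lemma trace_norm_contract:
  assumes "op_norm A \<le> 1" "op_norm B \<le> 1"
  shows "trace_norm (tensor_id (conjm A B) Y) \<le> trace_norm Y"
proof -
  have "trace_norm (tensor_id (conjm A B) Y) \<le> op_norm A * op_norm B * trace_norm Y"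
    by (rule trace_norm_tensor_conjm)
  also have "\<dots> \<le> 1 * 1 * trace_norm Y"
    using assms by (intro mult_right_mono mult_mono op_norm_nonneg trace_norm_nonneg) auto
  finally show ?thesis by simp
qed

theorem main_bound:
  fixes n :: nat and h :: "nat \<Rightarrow> real" and Hs :: "nat \<Rightarrow> complex^'d^'d"
    and t :: real and r :: nat and N :: nat
  assumes h_nonneg: "\<And>s. s \<in> {1..n} \<Longrightarrow> h s \<ge> 0"
    and Gamma_pos: "(\<Sum>s=1..n. h s) > 0"
    and herm: "\<And>s. s \<in> {1..n} \<Longrightarrow> hermitian (Hs s)"
    and norm_le: "\<And>s. s \<in> {1..n} \<Longrightarrow> op_norm (Hs s) \<le> 1"
    and r_pos: "r > 0"
    and N_def: "real N = real r * (\<Sum>s=1..n. h s)"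
  shows "diamond_norm (\<lambda>\<rho>. unitary_evol (\<Sum>s=1..n. h s *\<^sub>R Hs s) t \<rho>
                           - (qdrift n h Hs (t / real r) ^^ N) \<rho>)
           \<le> 4 * t\<^sup>2 * (\<Sum>s=1..n. h s) / real r"
proof -
  define \<Gamma> where "\<Gamma> = (\<Sum>s=1..n. h s)"
  define p where "p s = h s / \<Gamma>" for s
  define \<tau> where "\<tau> = t / real r"
  define S where "S = {1..n}"
  define G where "G = (\<Sum>s\<in>S. p s *\<^sub>R Hs s)"
  define K where "K = (\<Sum>s\<in>S. h s *\<^sub>R Hs s)"
  define E where "E = qdrift n h Hs \<tau>"
  define V where "V = Uf \<tau> G"
  define V' where "V' = Uf (- \<tau>) G"
  define CV where "CV = conjm V V'"
  define Ft where "Ft = tensor_id CV"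
  define Et where "Et = tensor_id E"
  have Gpos: "\<Gamma> > 0" using Gamma_pos by (simp add: \<Gamma>_def)
  have pnn: "p s \<ge> 0" if "s \<in> S" for s using h_nonneg[of s] that Gpos by (simp add: p_def S_def)
  have psum: "(\<Sum>s\<in>S. p s) = 1"
    using Gpos by (simp add: p_def S_def \<Gamma>_def flip: sum_divide_distrib)
  have Hh: "hermitian (Hs s)" "op_norm (Hs s) \<le> 1" if "s \<in> S" for s
    using herm norm_le that by (auto simp: S_def)
  have hermG: "hermitian G"
    unfolding hermitian_def G_def cadj_sum cadj_scaleR
    by (rule sum.cong) (simp_all add: Hh(1)[unfolded hermitian_def])
  have normG: "op_norm G \<le> 1"
  proof -
    have "op_norm G \<le> (\<Sum>s\<in>S. op_norm (p s *\<^sub>R Hs s))" unfolding G_def by (rule op_norm_sum)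
    also have "\<dots> \<le> (\<Sum>s\<in>S. p s * 1)"
    proof (rule sum_mono)
      fix s assume s: "s \<in> S"
      have "op_norm (p s *\<^sub>R Hs s) \<le> \<bar>p s\<bar> * op_norm (Hs s)" by (rule op_norm_scaleR)
      also have "\<dots> \<le> p s * 1" using pnn[OF s] Hh(2)[OF s] by (simp add: mult_left_le)
      finally show "op_norm (p s *\<^sub>R Hs s) \<le> p s * 1" .
    qed
    finally show ?thesis using psum by simp
  qed
  have KG: "K = \<Gamma> *\<^sub>R G"
    unfolding K_def G_def scaleR_sum_right using Gpos by (intro sum.cong) (simp_all add: p_def)
  have Eeq: "E \<rho> = (\<Sum>s\<in>S. p s *\<^sub>R conjm (Uf \<tau> (Hs s)) (Uf (- \<tau>) (Hs s)) \<rho>)" for \<rho>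
    by (simp add: E_def qdrift_def S_def p_def \<Gamma>_def unitary_evol_conjm)
  \<comment> \<open>Exact evolution as N-fold product\<close>
  obtain Q lam where Q: "unitary Q" and Gd: "G = conjd Q (\<chi> j. complex_of_real (lam j))"
    using herm_spectral_bound[OF hermG normG] by blast
  have sv: "\<Gamma> *\<^sub>R (\<chi> j. complex_of_real (lam j)) = (\<chi> j. complex_of_real (\<Gamma> * lam j))"
    by (simp add: vec_eq_iff) (simp add: scaleR_conv_of_real)
  have Kd: "K = conjd Q (\<chi> j. complex_of_real (\<Gamma> * lam j))"
    unfolding KG Gd conjd_scaleR[symmetric] sv ..
  have NT: "complex_of_nat N * complex_of_real \<tau> = complex_of_real t * complex_of_real \<Gamma>"
  proof -
    have "real N * \<tau> = t * \<Gamma>" using r_pos N_def by (simp add: \<tau>_def \<Gamma>_def)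
    then have "complex_of_real (real N * \<tau>) = complex_of_real (t * \<Gamma>)" by simp
    then show ?thesis by simp
  qed
  have expN: "mexp (cscale (- \<i> * of_real (\<sigma> * t)) K) = mpow (Uf (\<sigma> * \<tau>) G) N" for \<sigma>
  proof -
    have "mexp (cscale (- \<i> * of_real (\<sigma> * t)) K) =
        conjd Q (\<chi> j. exp (- \<i> * of_real (\<sigma> * t) * of_real (\<Gamma> * lam j)))"
      unfolding Kd by (rule mexp_herm[OF Q])
    also have "\<dots> = conjd Q (\<chi> j. exp (of_nat N * (- \<i> * of_real (\<sigma> * \<tau>) * of_real (lam j))))"
    proof -
      have eqj: "- \<i> * of_real (\<sigma> * t) * of_real (\<Gamma> * lam j) = of_nat N * (- \<i> * of_real (\<sigma> * \<tau>) * of_real (lam j))" for j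
      proof -
        have "of_nat N * (- \<i> * of_real (\<sigma> * \<tau>) * of_real (lam j)) =
            - \<i> * of_real \<sigma> * of_real (lam j) * (complex_of_nat N * complex_of_real \<tau>)"
          by (simp add: algebra_simps)
        also have "\<dots> = - \<i> * of_real \<sigma> * of_real (lam j) * (complex_of_real t * complex_of_real \<Gamma>)"
          by (simp only: NT)
        also have "\<dots> = - \<i> * of_real (\<sigma> * t) * of_real (\<Gamma> * lam j)"
          by (simp add: algebra_simps)
        finally show ?thesis by (rule sym)
      qed
      show ?thesis by (simp only: eqj)
    qed
    also have "\<dots> = mpow (Uf (\<sigma> * \<tau>) G) N"
      unfolding Uf_def Gd mexp_herm[OF Q] mpow_conjd_exp[OF Q] ..
    finally show ?thesis .
  qed
  have Uev: "unitary_evol K t \<rho> = (CV ^^ N) \<rho>" for \<rho>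
  proof -
    have "mexp (cscale (- \<i> * of_real t) K) = mpow V N"
      using expN[of 1] by (simp add: V_def)
    moreover have "mexp (cscale (\<i> * of_real t) K) = mpow V' N"
      using expN[of "-1"] by (simp add: V'_def)
    ultimately show ?thesis by (simp add: unitary_evol_def CV_def conjm_funpow)
  qed
  have Ufn: "op_norm (Uf x G) \<le> 1" for x
    unfolding Uf_def by (rule exp_estimates(1)[OF hermG normG])
  have Vn: "op_norm V \<le> 1" "op_norm V' \<le> 1"
    unfolding V_def V'_def by (rule Ufn)+
  have Ft_contr: "trace_norm (Ft Y) \<le> trace_norm Y" for Y
    unfolding Ft_def CV_def by (rule trace_norm_contract[OF Vn])
  have Ftp_contr: "trace_norm ((Ft ^^ k) Y) \<le> trace_norm Y" for k Y
    by (induction k) (auto intro: order_trans[OF Ft_contr])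
  have Usx: "op_norm (Uf x (Hs s)) \<le> 1" if "s \<in> S" for s x
    unfolding Uf_def by (rule exp_estimates(1)[OF Hh[OF that]])
  have Us: "op_norm (Uf \<tau> (Hs s)) \<le> 1" "op_norm (Uf (- \<tau>) (Hs s)) \<le> 1" if "s \<in> S" for s
    using Usx[OF that] by blast+
  have Et_eq: "Et Y = (\<Sum>s\<in>S. p s *\<^sub>R tensor_id (conjm (Uf \<tau> (Hs s)) (Uf (- \<tau>) (Hs s))) Y)" for Y
  proof -
    have "E = (\<lambda>\<rho>. \<Sum>s\<in>S. p s *\<^sub>R conjm (Uf \<tau> (Hs s)) (Uf (- \<tau>) (Hs s)) \<rho>)"
      using Eeq by (rule ext)
    then show ?thesis unfolding Et_def by (simp add: tensor_sum tensor_scaleR)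
  qed
  have Et_contr: "trace_norm (Et Y) \<le> trace_norm Y" for Y
  proof -
    have "trace_norm (Et Y) \<le> (\<Sum>s\<in>S. trace_norm (p s *\<^sub>R tensor_id (conjm (Uf \<tau> (Hs s)) (Uf (- \<tau>) (Hs s))) Y))"
      unfolding Et_eq by (rule trace_norm_sum)
    also have "\<dots> \<le> (\<Sum>s\<in>S. p s * trace_norm Y)"
    proof (rule sum_mono)
      fix s assume s: "s \<in> S"
      have "trace_norm (p s *\<^sub>R tensor_id (conjm (Uf \<tau> (Hs s)) (Uf (- \<tau>) (Hs s))) Y)
          \<le> \<bar>p s\<bar> * trace_norm (tensor_id (conjm (Uf \<tau> (Hs s)) (Uf (- \<tau>) (Hs s))) Y)"
        by (rule trace_norm_scaleR)
      also have "\<dots> \<le> p s * trace_norm Y"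
        using pnn[OF s] trace_norm_contract[OF Us[OF s]] by (simp add: mult_left_mono)
      finally show "trace_norm (p s *\<^sub>R tensor_id (conjm (Uf \<tau> (Hs s)) (Uf (- \<tau>) (Hs s))) Y)
          \<le> p s * trace_norm Y" .
    qed
    also have "\<dots> = trace_norm Y" using psum by (simp flip: sum_distrib_right)
    finally show ?thesis .
  qed
  have E_add: "E (a - b) = E a - E b" for a b
    unfolding Eeq by (simp add: conjm_def mm_diff_l mm_diff_r scaleR_right_diff_distrib sum_subtractf)
  have Et_add: "Et (a - b) = Et a - Et b" for a b
    unfolding Et_def by (rule tensor_additive[OF E_add])
  define Lf :: "complex^'d^'d \<Rightarrow> complex^'d^'d \<Rightarrow> complex^'d^'d" where "Lf H \<rho> = cscale (\<i> * of_real \<tau>) (H ** \<rho> - \<rho> ** H)" for H \<rho>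
  have Df_alt: "Df \<tau> H \<rho> = conjm (Uf \<tau> H) (Uf (- \<tau>) H) \<rho> - \<rho> + Lf H \<rho>" for H \<rho>
    by (simp add: Df_def conjm_def Lf_def)
  have Lf_sum: "Lf G \<rho> = (\<Sum>s\<in>S. p s *\<^sub>R Lf (Hs s) \<rho>)" for \<rho>
    unfolding Lf_def G_def sum_mm_l sum_mm_r
    by (simp add: scaleR_mm_l scaleR_mm_r cscale_sum cscale_diff cscale_scaleR
        scaleR_right_diff_distrib sum_subtractf)
  have step_id: "CV \<rho> - E \<rho> = Df \<tau> G \<rho> - (\<Sum>s\<in>S. p s *\<^sub>R Df \<tau> (Hs s) \<rho>)" for \<rho>
  proof -
    have "(\<Sum>s\<in>S. p s *\<^sub>R Df \<tau> (Hs s) \<rho>) =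
        (\<Sum>s\<in>S. p s *\<^sub>R conjm (Uf \<tau> (Hs s)) (Uf (- \<tau>) (Hs s)) \<rho>) - (\<Sum>s\<in>S. p s) *\<^sub>R \<rho>
        + (\<Sum>s\<in>S. p s *\<^sub>R Lf (Hs s) \<rho>)"
      by (simp add: Df_alt scaleR_right_distrib scaleR_right_diff_distrib sum.distrib sum_subtractf
          scaleR_sum_left)
    also have "\<dots> = E \<rho> - \<rho> + Lf G \<rho>" by (simp add: Eeq psum Lf_sum)
    finally show ?thesis by (simp add: Df_alt CV_def V_def V'_def)
  qed
  have step: "trace_norm (Ft Z - Et Z) \<le> 4 * \<tau>\<^sup>2 * trace_norm Z" for Z
  proof -
    have "Ft Z - Et Z = tensor_id (\<lambda>\<rho>. CV \<rho> - E \<rho>) Z"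
      unfolding Ft_def Et_def by (rule tensor_diff[symmetric])
    also have "\<dots> = tensor_id (Df \<tau> G) Z - (\<Sum>s\<in>S. p s *\<^sub>R tensor_id (Df \<tau> (Hs s)) Z)"
      unfolding step_id tensor_diff tensor_sum tensor_scaleR ..
    finally have eq: "Ft Z - Et Z = tensor_id (Df \<tau> G) Z - (\<Sum>s\<in>S. p s *\<^sub>R tensor_id (Df \<tau> (Hs s)) Z)" .
    have "trace_norm (Ft Z - Et Z) \<le> trace_norm (tensor_id (Df \<tau> G) Z)
        + trace_norm (\<Sum>s\<in>S. p s *\<^sub>R tensor_id (Df \<tau> (Hs s)) Z)"
      unfolding eq by (rule trace_norm_diff)
    also have "\<dots> \<le> 2 * \<tau>\<^sup>2 * trace_norm Z + (\<Sum>s\<in>S. p s * (2 * \<tau>\<^sup>2 * trace_norm Z))"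
    proof (rule add_mono)
      show "trace_norm (tensor_id (Df \<tau> G) Z) \<le> 2 * \<tau>\<^sup>2 * trace_norm Z"
        by (rule Df_bound[OF hermG normG])
      have "trace_norm (\<Sum>s\<in>S. p s *\<^sub>R tensor_id (Df \<tau> (Hs s)) Z)
          \<le> (\<Sum>s\<in>S. trace_norm (p s *\<^sub>R tensor_id (Df \<tau> (Hs s)) Z))" by (rule trace_norm_sum)
      also have "\<dots> \<le> (\<Sum>s\<in>S. p s * (2 * \<tau>\<^sup>2 * trace_norm Z))"
      proof (rule sum_mono)
        fix s assume s: "s \<in> S"
        have "trace_norm (p s *\<^sub>R tensor_id (Df \<tau> (Hs s)) Z) \<le> \<bar>p s\<bar> * trace_norm (tensor_id (Df \<tau> (Hs s)) Z)"
          by (rule trace_norm_scaleR)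
        also have "\<dots> \<le> p s * (2 * \<tau>\<^sup>2 * trace_norm Z)"
          using pnn[OF s] Df_bound[OF Hh[OF s]] by (simp add: mult_left_mono)
        finally show "trace_norm (p s *\<^sub>R tensor_id (Df \<tau> (Hs s)) Z) \<le> p s * (2 * \<tau>\<^sup>2 * trace_norm Z)" .
      qed
      finally show "trace_norm (\<Sum>s\<in>S. p s *\<^sub>R tensor_id (Df \<tau> (Hs s)) Z)
          \<le> (\<Sum>s\<in>S. p s * (2 * \<tau>\<^sup>2 * trace_norm Z))" .
    qed
    also have "\<dots> = 4 * \<tau>\<^sup>2 * trace_norm Z" using psum by (simp flip: sum_distrib_right)
    finally show ?thesis .
  qed
  \<comment> \<open>Telescoping\<close>
  have tele: "trace_norm ((Ft ^^ k) Y - (Et ^^ k) Y) \<le> real k * (4 * \<tau>\<^sup>2) * trace_norm Y" for k Y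
  proof (induction k)
    case 0
    then show ?case by (simp add: trace_norm_zero)
  next
    case (Suc k)
    define a where "a = (Ft ^^ k) Y"
    define b where "b = (Et ^^ k) Y"
    have "(Ft ^^ Suc k) Y - (Et ^^ Suc k) Y = (Ft a - Et a) + Et (a - b)"
      by (simp add: a_def b_def Et_add)
    then have "trace_norm ((Ft ^^ Suc k) Y - (Et ^^ Suc k) Y) \<le> trace_norm (Ft a - Et a) + trace_norm (Et (a - b))"
      by (simp add: trace_norm_add)
    also have "\<dots> \<le> 4 * \<tau>\<^sup>2 * trace_norm Y + real k * (4 * \<tau>\<^sup>2) * trace_norm Y"
    proof (rule add_mono)
      have "trace_norm (Ft a - Et a) \<le> 4 * \<tau>\<^sup>2 * trace_norm a" by (rule step)
      also have "\<dots> \<le> 4 * \<tau>\<^sup>2 * trace_norm Y"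
        unfolding a_def by (rule mult_left_mono[OF Ftp_contr]) simp
      finally show "trace_norm (Ft a - Et a) \<le> 4 * \<tau>\<^sup>2 * trace_norm Y" .
      show "trace_norm (Et (a - b)) \<le> real k * (4 * \<tau>\<^sup>2) * trace_norm Y"
        using Et_contr[of "a - b"] Suc by (simp add: a_def b_def)
    qed
    also have "\<dots> = real (Suc k) * (4 * \<tau>\<^sup>2) * trace_norm Y" by (simp add: algebra_simps)
    finally show ?case .
  qed
  define \<Phi> where "\<Phi> = (\<lambda>\<rho>. unitary_evol K t \<rho> - (E ^^ N) \<rho>)"
  have Phi_t: "tensor_id \<Phi> X = (Ft ^^ N) X - (Et ^^ N) X" for X
  proof -
    have "\<Phi> = (\<lambda>\<rho>. (CV ^^ N) \<rho> - (E ^^ N) \<rho>)" unfolding \<Phi>_def Uev ..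
    then show ?thesis unfolding Ft_def Et_def by (simp add: tensor_diff tensor_funpow)
  qed
  have bnd: "real N * (4 * \<tau>\<^sup>2) = 4 * t\<^sup>2 * \<Gamma> / real r"
    using r_pos N_def by (simp add: \<tau>_def \<Gamma>_def power2_eq_square field_simps)
  have "diamond_norm \<Phi> \<le> 4 * t\<^sup>2 * \<Gamma> / real r"
    unfolding diamond_norm_def
  proof (rule cSup_least)
    show "{trace_norm (tensor_id \<Phi> X) |X. trace_norm X \<le> 1} \<noteq> {}"
    proof -
      have "trace_norm (0::complex^('d\<times>'d)^('d\<times>'d)) \<le> 1" by (simp add: trace_norm_zero)
      then show ?thesis by blast
    qed
  next
    fix x assume "x \<in> {trace_norm (tensor_id \<Phi> X) |X. trace_norm X \<le> 1}"
    then obtain X where X: "trace_norm X \<le> 1" and x: "x = trace_norm (tensor_id \<Phi> X)" by blast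
    have "x \<le> real N * (4 * \<tau>\<^sup>2) * trace_norm X" unfolding x Phi_t by (rule tele)
    also have "\<dots> \<le> real N * (4 * \<tau>\<^sup>2) * 1" using X by (intro mult_left_mono) simp_all
    finally show "x \<le> 4 * t\<^sup>2 * \<Gamma> / real r" using bnd by simp
  qed
  then show ?thesis unfolding \<Phi>_def K_def E_def S_def \<tau>_def \<Gamma>_def .
qed

theorem corollary1:
  fixes n :: nat and h :: "nat \<Rightarrow> real" and Hs :: "nat \<Rightarrow> complex^'d^'d"
    and t :: real and r :: nat and N :: nat
  assumes h_nonneg: "\<And>s. s \<in> {1..n} \<Longrightarrow> h s \<ge> 0"
    and Gamma_pos: "(\<Sum>s=1..n. h s) > 0"
    and herm: "\<And>s. s \<in> {1..n} \<Longrightarrow> hermitian (Hs s)"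
    and norm_le: "\<And>s. s \<in> {1..n} \<Longrightarrow> op_norm (Hs s) \<le> 1"
    and t_nonneg: "t \<ge> 0"
    and r_pos: "r > 0"
    and N_pos: "N > 0"
    and N_def: "real N = real r * (\<Sum>s=1..n. h s)"
  shows "diamond_norm (\<lambda>\<rho>. unitary_evol (\<Sum>s=1..n. h s *\<^sub>R Hs s) t \<rho>
                           - (qdrift n h Hs (t / real r) ^^ N) \<rho>)
           \<le> 4 * t\<^sup>2 * (\<Sum>s=1..n. h s) / real r
       \<and> (\<forall>\<epsilon>>0. real r \<ge> real_of_int \<lceil>4 * t\<^sup>2 * (\<Sum>s=1..n. h s) / \<epsilon>\<rceil> \<longrightarrow>
             diamond_norm (\<lambda>\<rho>. unitary_evol (\<Sum>s=1..n. h s *\<^sub>R Hs s) t \<rho>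
                           - (qdrift n h Hs (t / real r) ^^ N) \<rho>) \<le> \<epsilon>)"
proof -
  have main: "diamond_norm (\<lambda>\<rho>. unitary_evol (\<Sum>s=1..n. h s *\<^sub>R Hs s) t \<rho>
                           - (qdrift n h Hs (t / real r) ^^ N) \<rho>)
           \<le> 4 * t\<^sup>2 * (\<Sum>s=1..n. h s) / real r"
    by (rule main_bound[OF h_nonneg Gamma_pos herm norm_le r_pos N_def])
  have eps: "4 * t\<^sup>2 * (\<Sum>s=1..n. h s) / real r \<le> \<epsilon>"
    if e: "\<epsilon> > 0" and rr: "real r \<ge> real_of_int \<lceil>4 * t\<^sup>2 * (\<Sum>s=1..n. h s) / \<epsilon>\<rceil>" for \<epsilon>
  proof -
    define c where "c = 4 * t\<^sup>2 * (\<Sum>s=1..n. h s)"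
    have "c / \<epsilon> \<le> real_of_int \<lceil>c / \<epsilon>\<rceil>" by (rule le_of_int_ceiling)
    also have "\<dots> \<le> real r" using rr by (simp add: c_def)
    finally have "c \<le> \<epsilon> * real r" using e by (simp add: divide_le_eq mult.commute)
    then have "c / real r \<le> \<epsilon>" using r_pos by (simp add: divide_le_eq mult.commute)
    then show ?thesis by (simp add: c_def)
  qed
  show ?thesis using main eps by (meson order_trans)
qed

end
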